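(* Let $(G,H)$ be a Hecke pair and let $N$ be a closed normal subgroup of $G$ contained in $H$. Put $G'=G/N$ and $H'=H/N$. Then $(G,H)$ has property (RD) if and only if the Hecke pair $(G',H')$ has property (RD). In particular, a discrete Hecke pair $(G,H)$ has property (RD) if and only if its reduction $(G/K_{(G,H)},H/K_{(G,H)})$, where $K_{(G,H)}=\bigcap_{x\in G}xHx^{-1}$, has property (RD).
   Context: Let $G$ be a locally compact group (possibly discrete) with closed subgroup $H$. If $H\backslash G$ is not discrete, one assumes $\Delta_G|_H=\Delta_H=1$, so there is a right $G$-invariant measure $\nu$ on $H\backslash G$ satisfying Weil's formula; in the discrete case $\nu$ is counting measure. $\mathcal H(G,H)$ is the space of compactly supported continuous right $H$-invariant functions on $H\backslash G$ with product $f*g(Hx)=\int_{H\backslash G}f(Hxy^{-1})g(Hy)\,d\nu(Hy)$ and left regular representation $\lambda(f)\xi=f*\xi$ on $L^2(H\backslash G,\nu)$. In the discrete case $(G,H)$ is a Hecke pair if $[H:H\cap xHx^{-1}]<\infty$ for all $x$; in the non-discrete case, if $\lambda$ is a well-defined homomorphism into bounded operators and every $Hx$ has some $f\in\mathcal H(G,H)$ with $f(Hx)\neq0$. (Under these hypotheses $(G',H')$ is again a Hecke pair.) A length function on $(G,H)$ is a Borel $l:G\to[0,\infty)$ with $l(e)=0$, $l(g)=l(g^{-1})$, $l(gh)\le l(g)+l(h)$, $l|_H=0$; locally bounded means the induced function on $H\backslash G$ is bounded on compact sets. $(G,H)$ has property (RD) if there are a locally bounded length function $l$ on $(G,H)$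 and $s,c>0$ with $\|\lambda(f)\|\le c\big(\int_{H\backslash G}|f(Hx)|^2(1+l(x))^{2s}d\nu(Hx)\big)^{1/2}$ for all $f\in\mathcal H(G,H)$. *)

theory Defs
  imports "HOL-Analysis.Analysis" "HOL-Algebra.Coset"
begin

definition lc_group :: "('a, 'b) monoid_scheme \<Rightarrow> 'a topology \<Rightarrow> bool" where
  "lc_group G T \<longleftrightarrow> group G \<and> topspace T = carrier G
     \<and> continuous_map (prod_topology T T) T (\<lambda>(x, y). x \<otimes>\<^bsub>G\<^esub> y)
     \<and> continuous_map T T (\<lambda>x. inv\<^bsub>G\<^esub> x)
     \<and> Hausdorff_space T \<and> locally_compact_space T"

definition quot_top :: "('a, 'b) monoid_scheme \<Rightarrow> 'a topology \<Rightarrow> 'a set \<Rightarrow> 'a set topology" where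
  "quot_top G T H = topology (\<lambda>U. U \<subseteq> rcosets\<^bsub>G\<^esub> H \<and> openin T (\<Union>U))"

definition quot_discrete :: "('a, 'b) monoid_scheme \<Rightarrow> 'a topology \<Rightarrow> 'a set \<Rightarrow> bool" where
  "quot_discrete G T H \<longleftrightarrow> (\<forall>C \<in> rcosets\<^bsub>G\<^esub> H. openin (quot_top G T H) {C})"

definition coset_rep :: "('a, 'b) monoid_scheme \<Rightarrow> 'a set \<Rightarrow> 'a set \<Rightarrow> 'a" where
  "coset_rep G H C = (SOME x. x \<in> carrier G \<and> C = H #>\<^bsub>G\<^esub> x)"

definition borel_of :: "'a topology \<Rightarrow> 'a measure" where
  "borel_of X = sigma (topspace X) {U. openin X U}"

definition radon_measure :: "'a topology \<Rightarrow> 'a measure \<Rightarrow> bool" where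
  "radon_measure X \<mu> \<longleftrightarrow> sets \<mu> = sets (borel_of X)
     \<and> (\<forall>K. compactin X K \<longrightarrow> emeasure \<mu> K < \<infinity>)
     \<and> (\<forall>A \<in> sets \<mu>. emeasure \<mu> A = (INF U \<in> {U. openin X U \<and> A \<subseteq> U}. emeasure \<mu> U))
     \<and> (\<forall>U. openin X U \<longrightarrow> emeasure \<mu> U = (SUP K \<in> {K. compactin X K \<and> K \<subseteq> U}. emeasure \<mu> K))"

text \<open>Standing assumption of the non-discrete case: Delta_G restricted to H is 1 and
  Delta_H = 1. Expressed without modular functions: some left Haar measure of G is
  invariant under right translation by elements of H, and some left Haar measure of H
  is also right invariant.\<close>
definition unimodular_cond :: "('a, 'b) monoid_scheme \<Rightarrow> 'a topology \<Rightarrow> 'a set \<Rightarrow> bool" where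
  "unimodular_cond G T H \<longleftrightarrow>
     (\<exists>\<mu>. radon_measure T \<mu> \<and> emeasure \<mu> (space \<mu>) \<noteq> 0
        \<and> (\<forall>x \<in> carrier G. \<forall>A \<in> sets \<mu>. emeasure \<mu> ((\<lambda>y. x \<otimes>\<^bsub>G\<^esub> y) ` A) = emeasure \<mu> A)
        \<and> (\<forall>h \<in> H. \<forall>A \<in> sets \<mu>. emeasure \<mu> ((\<lambda>y. y \<otimes>\<^bsub>G\<^esub> h) ` A) = emeasure \<mu> A))
   \<and> (\<exists>\<mu>. radon_measure (subtopology T H) \<mu> \<and> emeasure \<mu> (space \<mu>) \<noteq> 0
        \<and> (\<forall>x \<in> H. \<forall>A \<in> sets \<mu>. emeasure \<mu> ((\<lambda>y. x \<otimes>\<^bsub>G\<^esub> y) ` A) = emeasure \<mu> A)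
        \<and> (\<forall>h \<in> H. \<forall>A \<in> sets \<mu>. emeasure \<mu> ((\<lambda>y. y \<otimes>\<^bsub>G\<^esub> h) ` A) = emeasure \<mu> A))"

text \<open>The measure nu on H\G: counting measure if H\G is discrete; otherwise a nonzero
  right G-invariant Radon measure (such a measure is unique up to a positive scalar,
  so it is the Weil measure up to normalisation).\<close>
definition quot_measure :: "('a, 'b) monoid_scheme \<Rightarrow> 'a topology \<Rightarrow> 'a set \<Rightarrow> 'a set measure \<Rightarrow> bool" where
  "quot_measure G T H \<nu> \<longleftrightarrow>
     (if quot_discrete G T H then \<nu> = count_space (rcosets\<^bsub>G\<^esub> H)
      else radon_measure (quot_top G T H) \<nu> \<and> emeasure \<nu> (space \<nu>) \<noteq> 0
        \<and> (\<forall>g \<in> carrier G. \<forall>A \<in> sets \<nu>.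
              emeasure \<nu> ((\<lambda>C. C #>\<^bsub>G\<^esub> g) ` A) = emeasure \<nu> A))"

definition hecke_alg :: "('a, 'b) monoid_scheme \<Rightarrow> 'a topology \<Rightarrow> 'a set \<Rightarrow> ('a set \<Rightarrow> complex) set" where
  "hecke_alg G T H = {f. continuous_map (quot_top G T H) euclidean f
      \<and> (\<exists>K. compactin (quot_top G T H) K \<and> (\<forall>C \<in> rcosets\<^bsub>G\<^esub> H - K. f C = 0))
      \<and> (\<forall>C \<in> rcosets\<^bsub>G\<^esub> H. \<forall>h \<in> H. f (C #>\<^bsub>G\<^esub> h) = f C)}"

definition hconv :: "('a, 'b) monoid_scheme \<Rightarrow> 'a set \<Rightarrow> 'a set measure
      \<Rightarrow> ('a set \<Rightarrow> complex) \<Rightarrow> ('a set \<Rightarrow> complex) \<Rightarrow> 'a set \<Rightarrow> complex" where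
  "hconv G H \<nu> f \<xi> C = (LINT D|\<nu>. f (C #>\<^bsub>G\<^esub> inv\<^bsub>G\<^esub> (coset_rep G H D)) * \<xi> D)"

definition L2set :: "'c measure \<Rightarrow> ('c \<Rightarrow> complex) set" where
  "L2set \<nu> = {\<xi>. \<xi> \<in> borel_measurable \<nu> \<and> integrable \<nu> (\<lambda>D. (cmod (\<xi> D))\<^sup>2)}"

definition l2norm :: "'c measure \<Rightarrow> ('c \<Rightarrow> complex) \<Rightarrow> real" where
  "l2norm \<nu> \<xi> = sqrt (LINT D|\<nu>. (cmod (\<xi> D))\<^sup>2)"

definition lambda_norm :: "('a, 'b) monoid_scheme \<Rightarrow> 'a set \<Rightarrow> 'a set measure \<Rightarrow> ('a set \<Rightarrow> complex) \<Rightarrow> real" where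
  "lambda_norm G H \<nu> f = Inf {M. 0 \<le> M \<and> (\<forall>\<xi> \<in> L2set \<nu>. l2norm \<nu> (hconv G H \<nu> f \<xi>) \<le> M * l2norm \<nu> \<xi>)}"

text \<open>lambda is a well-defined homomorphism from H(G,H) into bounded operators on L^2.\<close>
definition lambda_ok :: "('a, 'b) monoid_scheme \<Rightarrow> 'a topology \<Rightarrow> 'a set \<Rightarrow> 'a set measure \<Rightarrow> bool" where
  "lambda_ok G T H \<nu> \<longleftrightarrow>
     (\<forall>f \<in> hecke_alg G T H. \<forall>\<xi> \<in> L2set \<nu>.
        (AE C in \<nu>. integrable \<nu> (\<lambda>D. f (C #>\<^bsub>G\<^esub> inv\<^bsub>G\<^esub> (coset_rep G H D)) * \<xi> D))
        \<and> hconv G H \<nu> f \<xi> \<in> L2set \<nu>)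
   \<and> (\<forall>f \<in> hecke_alg G T H. \<exists>M. \<forall>\<xi> \<in> L2set \<nu>.
        l2norm \<nu> (hconv G H \<nu> f \<xi>) \<le> M * l2norm \<nu> \<xi>)
   \<and> (\<forall>f \<in> hecke_alg G T H. \<forall>g \<in> hecke_alg G T H. \<forall>\<xi> \<in> L2set \<nu>.
        AE C in \<nu>. hconv G H \<nu> (hconv G H \<nu> f g) \<xi> C = hconv G H \<nu> f (hconv G H \<nu> g \<xi>) C)"

definition hecke_pair :: "('a, 'b) monoid_scheme \<Rightarrow> 'a topology \<Rightarrow> 'a set \<Rightarrow> bool" where
  "hecke_pair G T H \<longleftrightarrow> lc_group G T \<and> subgroup H G \<and> closedin T H \<and>
     (if quot_discrete G T H then
        (\<forall>x \<in> carrier G. finite ((\<lambda>h. (H \<inter> (x <#\<^bsub>G\<^esub> H #>\<^bsub>G\<^esub> inv\<^bsub>G\<^esub> x)) #>\<^bsub>G\<^esub> h) ` H))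
      else unimodular_cond G T H \<and>
        (\<exists>\<nu>. quot_measure G T H \<nu> \<and> lambda_ok G T H \<nu>
             \<and> (\<forall>C \<in> rcosets\<^bsub>G\<^esub> H. \<exists>f \<in> hecke_alg G T H. f C \<noteq> 0)))"

definition length_fn :: "('a, 'b) monoid_scheme \<Rightarrow> 'a topology \<Rightarrow> 'a set \<Rightarrow> ('a \<Rightarrow> real) \<Rightarrow> bool" where
  "length_fn G T H l \<longleftrightarrow> l \<in> borel_measurable (borel_of T)
     \<and> (\<forall>x \<in> carrier G. 0 \<le> l x)
     \<and> l \<one>\<^bsub>G\<^esub> = 0
     \<and> (\<forall>x \<in> carrier G. l (inv\<^bsub>G\<^esub> x) = l x)
     \<and> (\<forall>x \<in> carrier G. \<forall>y \<in> carrier G. l (x \<otimes>\<^bsub>G\<^esub> y) \<le> l x + l y)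
     \<and> (\<forall>h \<in> H. l h = 0)"

text \<open>The induced function on H\G (well defined for length functions) is bounded on compacta.\<close>
definition locally_bounded_len :: "('a, 'b) monoid_scheme \<Rightarrow> 'a topology \<Rightarrow> 'a set \<Rightarrow> ('a \<Rightarrow> real) \<Rightarrow> bool" where
  "locally_bounded_len G T H l \<longleftrightarrow>
     (\<forall>K. compactin (quot_top G T H) K \<longrightarrow> (\<exists>B. \<forall>C \<in> K. l (coset_rep G H C) \<le> B))"

definition has_RD :: "('a, 'b) monoid_scheme \<Rightarrow> 'a topology \<Rightarrow> 'a set \<Rightarrow> bool" where
  "has_RD G T H \<longleftrightarrow> (\<exists>\<nu>. quot_measure G T H \<nu> \<and>
     (\<exists>l s c. length_fn G T H l \<and> locally_bounded_len G T H l \<and> s > 0 \<and> c > 0 \<and>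
        (\<forall>f \<in> hecke_alg G T H.
           lambda_norm G H \<nu> f \<le>
             c * sqrt (LINT C|\<nu>. (cmod (f C))\<^sup>2 * (1 + l (coset_rep G H C)) powr (2 * s)))))"

definition quot_sub :: "('a, 'b) monoid_scheme \<Rightarrow> 'a set \<Rightarrow> 'a set \<Rightarrow> 'a set set" where
  "quot_sub G N H = (\<lambda>h. N #>\<^bsub>G\<^esub> h) ` H"

end

theory Submission
  imports Defs
begin

lemma opens_Pow: "{U. openin X U} \<subseteq> Pow (topspace X)"
  using openin_subset by blast

lemma space_borel_of [simp]: "space (borel_of X) = topspace X"
  unfolding borel_of_def by (simp add: space_measure_of[OF opens_Pow])

lemma sets_borel_of: "sets (borel_of X) = sigma_sets (topspace X) {U. openin X U}"
  unfolding borel_of_def by (simp add: sets_measure_of[OF opens_Pow])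

lemma openin_borel_of: "openin X U \<Longrightarrow> U \<in> sets (borel_of X)"
  unfolding sets_borel_of by auto

lemma closedin_borel_of: "closedin X U \<Longrightarrow> U \<in> sets (borel_of X)"
proof -
  assume "closedin X U"
  then have "openin X (topspace X - U)" "U \<subseteq> topspace X" by (auto simp: closedin_def)
  then have "topspace X - (topspace X - U) \<in> sets (borel_of X)"
    using openin_borel_of[of X "topspace X - U"] sets.compl_sets[of "topspace X - U" "borel_of X"]
    by simp
  moreover have "topspace X - (topspace X - U) = U" using \<open>U \<subseteq> _\<close> by blast
  ultimately show ?thesis by simp
qed

lemma continuous_map_measurable:
  assumes "continuous_map X Y f"
  shows "f \<in> borel_of X \<rightarrow>\<^sub>M borel_of Y"
  unfolding borel_of_def[of Y]
proof (rule measurable_measure_of[OF opens_Pow])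
  show "f \<in> space (borel_of X) \<rightarrow> topspace Y"
    using assms by (simp add: continuous_map_def)
  fix U assume "U \<in> {U. openin Y U}"
  then have "openin X {x \<in> topspace X. f x \<in> U}" using assms by (simp add: continuous_map_def)
  moreover have "f -` U \<inter> space (borel_of X) = {x \<in> topspace X. f x \<in> U}" by auto
  ultimately show "f -` U \<inter> space (borel_of X) \<in> sets (borel_of X)"
    by (simp add: openin_borel_of)
qed

lemma continuous_map_borel_measurable:
  assumes "continuous_map X euclidean f"
  shows "f \<in> borel_measurable (borel_of X)"
proof (rule borel_measurableI)
  fix S :: "'b set" assume "open S"
  then have "openin X {x \<in> topspace X. f x \<in> S}" using assms by (simp add: continuous_map_def)
  moreover have "f -` S \<inter> space (borel_of X) = {x \<in> topspace X. f x \<in> S}" by auto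
  ultimately show "f -` S \<inter> space (borel_of X) \<in> sets (borel_of X)"
    by (simp add: openin_borel_of)
qed

lemma sets_borel_of_discrete:
  assumes "\<And>U. U \<subseteq> topspace X \<Longrightarrow> openin X U"
  shows "sets (borel_of X) = Pow (topspace X)"
proof
  show "sets (borel_of X) \<subseteq> Pow (topspace X)"
    using sets.sets_into_space[of _ "borel_of X"] by auto
  show "Pow (topspace X) \<subseteq> sets (borel_of X)"
    using assms openin_borel_of by blast
qed

section \<open>The quotient topology\<close>

lemma istopology_quot:
  assumes "group G" "subgroup H G"
  shows "istopology (\<lambda>U. U \<subseteq> rcosets\<^bsub>G\<^esub> H \<and> openin T (\<Union>U))"
  unfolding istopology_def
proof (rule conjI; intro allI impI ballI)
  fix S S' assume S: "S \<subseteq> rcosets\<^bsub>G\<^esub> H \<and> openin T (\<Union>S)"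
    and S': "S' \<subseteq> rcosets\<^bsub>G\<^esub> H \<and> openin T (\<Union>S')"
  have disj: "pairwise disjnt (rcosets\<^bsub>G\<^esub> H)"
    using group.rcos_disjoint[OF assms] .
  have "\<Union>(S \<inter> S') = \<Union>S \<inter> \<Union>S'"
  proof
    show "\<Union>S \<inter> \<Union>S' \<subseteq> \<Union>(S \<inter> S')"
    proof
      fix x assume "x \<in> \<Union>S \<inter> \<Union>S'"
      then obtain A B where AB: "A \<in> S" "B \<in> S'" "x \<in> A" "x \<in> B" by blast
      then have "A = B" using disj S S' unfolding pairwise_def disjnt_def by blast
      then show "x \<in> \<Union>(S \<inter> S')" using AB by blast
    qed
  qed blast
  then show "S \<inter> S' \<subseteq> rcosets\<^bsub>G\<^esub> H \<and> openin T (\<Union>(S \<inter> S'))"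
    using S S' by auto
next
  fix K assume "\<forall>S\<in>K. S \<subseteq> rcosets\<^bsub>G\<^esub> H \<and> openin T (\<Union>S)"
  moreover have "\<Union>(\<Union>K) = \<Union>((\<lambda>S. \<Union>S) ` K)" by blast
  ultimately show "\<Union>K \<subseteq> rcosets\<^bsub>G\<^esub> H \<and> openin T (\<Union>(\<Union>K))"
    by (metis (no_types, lifting) Sup_least image_iff openin_Union)
qed

lemma openin_quot_top:
  assumes "group G" "subgroup H G"
  shows "openin (quot_top G T H) U \<longleftrightarrow> U \<subseteq> rcosets\<^bsub>G\<^esub> H \<and> openin T (\<Union>U)"
  unfolding quot_top_def using topology_inverse'[OF istopology_quot[OF assms]] by simp

lemma topspace_quot_top:
  assumes "group G" "subgroup H G" "topspace T = carrier G"
  shows "topspace (quot_top G T H) = rcosets\<^bsub>G\<^esub> H"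
proof -
  have "openin (quot_top G T H) (rcosets\<^bsub>G\<^esub> H)"
    using assms group.rcosets_part_G[OF assms(1,2)] by (metis openin_quot_top openin_topspace order_refl)
  then have "rcosets\<^bsub>G\<^esub> H \<subseteq> topspace (quot_top G T H)" by (rule openin_subset)
  moreover have "topspace (quot_top G T H) \<subseteq> rcosets\<^bsub>G\<^esub> H"
    using openin_quot_top[OF assms(1,2)] openin_topspace by blast
  ultimately show ?thesis by blast
qed

lemma rcos_eq_iff:
  fixes G (structure)
  assumes "group G" "subgroup H G" "x \<in> carrier G" "y \<in> carrier G"
  shows "H #>\<^bsub>G\<^esub> x = H #>\<^bsub>G\<^esub> y \<longleftrightarrow> x \<otimes>\<^bsub>G\<^esub> inv\<^bsub>G\<^esub> y \<in> H"
proof -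
  interpret group G by fact
  have "H #> x = H #> y \<longleftrightarrow> x \<in> H #> y"
    using assms by (metis repr_independence rcos_self)
  also have "\<dots> \<longleftrightarrow> x \<otimes> inv y \<in> H"
    using subgroup.rcos_module[OF assms(2,1,4,3)] .
  finally show ?thesis .
qed

lemma rcos_mem_eq:
  fixes G (structure)
  assumes "group G" "subgroup H G" "C \<in> rcosets\<^bsub>G\<^esub> H" "y \<in> C"
  shows "C = H #>\<^bsub>G\<^esub> y"
proof -
  interpret group G by fact
  obtain x where x: "x \<in> carrier G" "C = H #> x" using assms(3) unfolding RCOSETS_def by blast
  then show ?thesis using assms repr_independence by blast
qed

lemma rcosets_mult:
  fixes G (structure)
  assumes "group G" "subgroup H G" "C \<in> rcosets\<^bsub>G\<^esub> H" "g \<in> carrier G"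
  shows "C #>\<^bsub>G\<^esub> g \<in> rcosets\<^bsub>G\<^esub> H"
proof -
  interpret group G by fact
  obtain x where x: "x \<in> carrier G" "C = H #> x" using assms(3) unfolding RCOSETS_def by blast
  then have "C #> g = H #> (x \<otimes> g)"
    using assms coset_mult_assoc subgroup.subset by blast
  then show ?thesis using x assms rcosetsI subgroup.subset by (metis m_closed)
qed

lemma rcosets_subset:
  fixes G (structure)
  assumes "group G" "subgroup H G" "C \<in> rcosets\<^bsub>G\<^esub> H"
  shows "C \<subseteq> carrier G"
  using subgroup.rcosets_carrier[OF assms(2,1,3)] .

lemma coset_rep:
  fixes G (structure)
  assumes "group G" "subgroup H G" "C \<in> rcosets\<^bsub>G\<^esub> H"
  shows "coset_rep G H C \<in> carrier G" "C = H #>\<^bsub>G\<^esub> coset_rep G H C"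
    "coset_rep G H C \<in> C"
proof -
  interpret group G by fact
  have ex: "\<exists>x. x \<in> carrier G \<and> C = H #> x" using assms(3) unfolding RCOSETS_def by blast
  show c: "coset_rep G H C \<in> carrier G" "C = H #> coset_rep G H C"
    unfolding coset_rep_def using someI_ex[OF ex] by auto
  then show "coset_rep G H C \<in> C" using rcos_self assms by metis
qed

lemma coset_rep_coset:
  fixes G (structure)
  assumes "group G" "subgroup H G" "x \<in> carrier G"
  shows "\<exists>h\<in>H. coset_rep G H (H #>\<^bsub>G\<^esub> x) = h \<otimes>\<^bsub>G\<^esub> x"
proof -
  interpret group G by fact
  have C: "H #> x \<in> rcosets H" using assms rcosetsI subgroup.subset by blast
  have "coset_rep G H (H #> x) \<in> H #> x" using coset_rep(3)[OF assms(1,2) C] .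
  then show ?thesis unfolding r_coset_def by blast
qed

lemma lcg_basic:
  fixes G (structure)
  assumes "lc_group G T"
  shows "group G" "topspace T = carrier G" "Hausdorff_space T" "locally_compact_space T"
    "continuous_map (prod_topology T T) T (\<lambda>(x, y). x \<otimes>\<^bsub>G\<^esub> y)"
    "continuous_map T T (\<lambda>x. inv\<^bsub>G\<^esub> x)"
  using assms unfolding lc_group_def by auto

lemma lcg_ltrans_cont:
  fixes G (structure)
  assumes "lc_group G T" "a \<in> carrier G"
  shows "continuous_map T T (\<lambda>y. a \<otimes>\<^bsub>G\<^esub> y)"
proof -
  have "continuous_map T (prod_topology T T) (\<lambda>y. (a, y))"
    using assms lcg_basic(2)[OF assms(1)]
    by (intro continuous_map_pairedI) (auto simp: continuous_map_const)
  from continuous_map_compose[OF this lcg_basic(5)[OF assms(1)]]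
  show ?thesis by (simp add: o_def)
qed

lemma lcg_rtrans_cont:
  fixes G (structure)
  assumes "lc_group G T" "a \<in> carrier G"
  shows "continuous_map T T (\<lambda>y. y \<otimes>\<^bsub>G\<^esub> a)"
proof -
  have "continuous_map T (prod_topology T T) (\<lambda>y. (y, a))"
    using assms lcg_basic(2)[OF assms(1)]
    by (intro continuous_map_pairedI) (auto simp: continuous_map_const)
  from continuous_map_compose[OF this lcg_basic(5)[OF assms(1)]]
  show ?thesis by (simp add: o_def)
qed

lemma cont_preimage_open:
  fixes G (structure)
  assumes "continuous_map X Y f" "openin Y U"
  shows "openin X {x \<in> topspace X. f x \<in> U}"
  using assms by (simp add: continuous_map_def)

lemma lcg_ltrans_open:
  fixes G (structure)
  assumes "lc_group G T" "a \<in> carrier G" "openin T U"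
  shows "openin T ((\<lambda>y. a \<otimes>\<^bsub>G\<^esub> y) ` U)"
proof -
  interpret group G using lcg_basic[OF assms(1)] by simp
  have U: "U \<subseteq> carrier G" using openin_subset[OF assms(3)] lcg_basic(2)[OF assms(1)] by simp
  have "(\<lambda>y. a \<otimes> y) ` U = {y \<in> topspace T. inv a \<otimes> y \<in> U}"
  proof (rule Set.set_eqI, rule iffI)
    fix z assume "z \<in> (\<lambda>y. a \<otimes> y) ` U"
    then obtain y where "y \<in> U" "z = a \<otimes> y" by blast
    then show "z \<in> {y \<in> topspace T. inv a \<otimes> y \<in> U}"
      using U assms lcg_basic(2)[OF assms(1)] by (auto simp: m_assoc[symmetric])
  next
    fix z assume "z \<in> {y \<in> topspace T. inv a \<otimes> y \<in> U}"
    then have "z \<in> carrier G" "inv a \<otimes> z \<in> U" using lcg_basic(2)[OF assms(1)] by auto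
    moreover have "z = a \<otimes> (inv a \<otimes> z)" using \<open>z \<in> carrier G\<close> assms(2) by (simp add: m_assoc[symmetric])
    ultimately show "z \<in> (\<lambda>y. a \<otimes> y) ` U" by blast
  qed
  then show ?thesis
    using cont_preimage_open[OF lcg_ltrans_cont[OF assms(1) inv_closed[OF assms(2)]] assms(3)] by simp
qed

lemma lcg_rtrans_open:
  fixes G (structure)
  assumes "lc_group G T" "a \<in> carrier G" "openin T U"
  shows "openin T ((\<lambda>y. y \<otimes>\<^bsub>G\<^esub> a) ` U)"
proof -
  interpret group G using lcg_basic[OF assms(1)] by simp
  have U: "U \<subseteq> carrier G" using openin_subset[OF assms(3)] lcg_basic(2)[OF assms(1)] by simp
  have "(\<lambda>y. y \<otimes> a) ` U = {y \<in> topspace T. y \<otimes> inv a \<in> U}"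
  proof (rule Set.set_eqI, rule iffI)
    fix z assume "z \<in> (\<lambda>y. y \<otimes> a) ` U"
    then obtain y where "y \<in> U" "z = y \<otimes> a" by blast
    then show "z \<in> {y \<in> topspace T. y \<otimes> inv a \<in> U}"
      using U assms lcg_basic(2)[OF assms(1)] by (auto simp: m_assoc)
  next
    fix z assume "z \<in> {y \<in> topspace T. y \<otimes> inv a \<in> U}"
    then have "z \<in> carrier G" "z \<otimes> inv a \<in> U" using lcg_basic(2)[OF assms(1)] by auto
    moreover have "z = (z \<otimes> inv a) \<otimes> a" using \<open>z \<in> carrier G\<close> assms(2) by (simp add: m_assoc)
    ultimately show "z \<in> (\<lambda>y. y \<otimes> a) ` U" by blast
  qed
  then show ?thesis
    using cont_preimage_open[OF lcg_rtrans_cont[OF assms(1) inv_closed[OF assms(2)]] assms(3)] by simp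
qed

lemma lcg_inv_open:
  fixes G (structure)
  assumes "lc_group G T" "openin T U"
  shows "openin T ((\<lambda>y. inv\<^bsub>G\<^esub> y) ` U)"
proof -
  interpret group G using lcg_basic[OF assms(1)] by simp
  have U: "U \<subseteq> carrier G" using openin_subset[OF assms(2)] lcg_basic(2)[OF assms(1)] by simp
  have "(\<lambda>y. inv y) ` U = {y \<in> topspace T. inv y \<in> U}"
  proof (rule Set.set_eqI, rule iffI)
    fix z assume "z \<in> (\<lambda>y. inv y) ` U"
    then show "z \<in> {y \<in> topspace T. inv y \<in> U}"
      using U assms lcg_basic(2)[OF assms(1)] by auto
  next
    fix z assume "z \<in> {y \<in> topspace T. inv y \<in> U}"
    then have "z \<in> carrier G" "inv z \<in> U" using lcg_basic(2)[OF assms(1)] by auto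
    then show "z \<in> (\<lambda>y. inv y) ` U" by (metis image_eqI inv_inv)
  qed
  then show ?thesis
    using cont_preimage_open[OF lcg_basic(6)[OF assms(1)] assms(2)] by simp
qed

lemma lcg_quot_cont:
  fixes G (structure)
  assumes "lc_group G T" "subgroup K G"
  shows "continuous_map T (quot_top G T K) (\<lambda>y. K #>\<^bsub>G\<^esub> y)"
proof -
  interpret group G using lcg_basic[OF assms(1)] by simp
  note ts = lcg_basic(2)[OF assms(1)]
  show ?thesis unfolding continuous_map_def
  proof (intro conjI allI impI)
    show "(\<lambda>y. K #> y) \<in> topspace T \<rightarrow> topspace (quot_top G T K)"
      using topspace_quot_top[OF is_group assms(2) ts] ts rcosetsI subgroup.subset[OF assms(2)] by auto
    fix U assume "openin (quot_top G T K) U"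
    then have U: "U \<subseteq> rcosets K" "openin T (\<Union>U)" using openin_quot_top[OF is_group assms(2)] by auto
    have "{x \<in> topspace T. K #> x \<in> U} = \<Union>U"
    proof (rule Set.set_eqI, rule iffI)
      fix x assume "x \<in> {x \<in> topspace T. K #> x \<in> U}"
      then show "x \<in> \<Union>U" using rcos_self[OF _ assms(2)] ts by blast
    next
      fix x assume "x \<in> \<Union>U"
      then obtain C where C: "C \<in> U" "x \<in> C" by blast
      then have "C = K #> x" using rcos_mem_eq[OF is_group assms(2)] U by blast
      moreover have "x \<in> carrier G" using C U rcosets_subset[OF is_group assms(2)] by blast
      ultimately show "x \<in> {x \<in> topspace T. K #> x \<in> U}" using C ts by auto
    qed
    then show "openin T {x \<in> topspace T. K #> x \<in> U}" using U by simp
  qed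
qed

lemma lcg_quot_open:
  fixes G (structure)
  assumes "lc_group G T" "subgroup K G" "openin T U"
  shows "openin (quot_top G T K) ((\<lambda>y. K #>\<^bsub>G\<^esub> y) ` U)"
proof -
  interpret group G using lcg_basic[OF assms(1)] by simp
  note ts = lcg_basic(2)[OF assms(1)]
  have Uc: "U \<subseteq> carrier G" using openin_subset[OF assms(3)] ts by simp
  have "\<Union>((\<lambda>y. K #> y) ` U) = (\<Union>k\<in>K. (\<lambda>y. k \<otimes> y) ` U)"
    unfolding r_coset_def by blast
  moreover have "openin T (\<Union>k\<in>K. (\<lambda>y. k \<otimes> y) ` U)"
    using lcg_ltrans_open[OF assms(1) _ assms(3)] subgroup.mem_carrier[OF assms(2)] by auto
  moreover have "(\<lambda>y. K #> y) ` U \<subseteq> rcosets K"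
    using Uc rcosetsI subgroup.subset[OF assms(2)] by blast
  ultimately show ?thesis using openin_quot_top[OF is_group assms(2)] by simp
qed

lemma lcg_quot_hausdorff:
  fixes G (structure)
  assumes "lc_group G T" "subgroup H G" "closedin T H"
  shows "Hausdorff_space (quot_top G T H)"
proof -
  interpret group G using lcg_basic[OF assms(1)] by simp
  note ts = lcg_basic(2)[OF assms(1)]
  have cm: "continuous_map (prod_topology T T) T (\<lambda>(a, b). a \<otimes> inv b)"
  proof -
    have "continuous_map (prod_topology T T) (prod_topology T T) (\<lambda>(a, b). (a, inv b))"
      using lcg_basic(6)[OF assms(1)]
      by (auto intro!: continuous_map_pairedI continuous_map_fst
          continuous_map_compose[OF continuous_map_snd, unfolded o_def] simp: case_prod_unfold)
    from continuous_map_compose[OF this lcg_basic(5)[OF assms(1)]]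
    show ?thesis by (simp add: o_def case_prod_unfold)
  qed
  have Oo: "openin T (carrier G - H)" using assms(3) ts by (simp add: closedin_def)
  have PO: "openin (prod_topology T T) {p \<in> topspace (prod_topology T T). (\<lambda>(a, b). a \<otimes> inv b) p \<in> carrier G - H}"
    using cont_preimage_open[OF cm Oo] .
  show ?thesis unfolding Hausdorff_space_def
  proof (intro allI impI)
    fix C D assume CD: "C \<in> topspace (quot_top G T H) \<and> D \<in> topspace (quot_top G T H) \<and> C \<noteq> D"
    then have CD': "C \<in> rcosets H" "D \<in> rcosets H" "C \<noteq> D"
      using topspace_quot_top[OF is_group assms(2) ts] by auto
    obtain x y where xy: "x \<in> carrier G" "y \<in> carrier G" "C = H #> x" "D = H #> y"
      using CD' unfolding RCOSETS_def by blast
    have "x \<otimes> inv y \<notin> H" using rcos_eq_iff[OF is_group assms(2) xy(1,2)] xy CD' by blast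
    then have "(x, y) \<in> {p \<in> topspace (prod_topology T T). (\<lambda>(a, b). a \<otimes> inv b) p \<in> carrier G - H}"
      using xy ts by auto
    then obtain U V where UV: "openin T U" "openin T V" "x \<in> U" "y \<in> V"
      "U \<times> V \<subseteq> {p \<in> topspace (prod_topology T T). (\<lambda>(a, b). a \<otimes> inv b) p \<in> carrier G - H}"
    proof -
      have "(x, y) \<in> {p \<in> topspace (prod_topology T T). (\<lambda>(a, b). a \<otimes> inv b) p \<in> carrier G - H} \<longrightarrow>
        (\<exists>U V. openin T U \<and> openin T V \<and> x \<in> U \<and> y \<in> V \<and>
          U \<times> V \<subseteq> {p \<in> topspace (prod_topology T T). (\<lambda>(a, b). a \<otimes> inv b) p \<in> carrier G - H})"
        using PO unfolding openin_prod_topology_alt by (rule spec[where x=y, OF spec[where x=x]])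
      then show ?thesis using that \<open>(x, y) \<in> _\<close> by blast
    qed
    show "\<exists>U V. openin (quot_top G T H) U \<and> openin (quot_top G T H) V \<and> C \<in> U \<and> D \<in> V \<and> disjnt U V"
    proof (intro exI conjI)
      show "openin (quot_top G T H) ((\<lambda>y. H #> y) ` U)" "openin (quot_top G T H) ((\<lambda>y. H #> y) ` V)"
        using lcg_quot_open[OF assms(1,2)] UV by auto
      show "C \<in> (\<lambda>y. H #> y) ` U" "D \<in> (\<lambda>y. H #> y) ` V" using xy UV by auto
      show "disjnt ((\<lambda>y. H #> y) ` U) ((\<lambda>y. H #> y) ` V)"
        unfolding disjnt_def
      proof (rule ccontr)
        assume "(\<lambda>y. H #> y) ` U \<inter> (\<lambda>y. H #> y) ` V \<noteq> {}"
        then obtain u v where "u \<in> U" "v \<in> V" "H #> u = H #> v" by blast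
        moreover have "u \<in> carrier G" "v \<in> carrier G"
          using \<open>u \<in> U\<close> \<open>v \<in> V\<close> UV openin_subset ts by blast+
        ultimately have "u \<otimes> inv v \<in> H" using rcos_eq_iff[OF is_group assms(2)] by blast
        moreover have "(u, v) \<in> U \<times> V" using \<open>u \<in> U\<close> \<open>v \<in> V\<close> by simp
        ultimately show False using UV(5) by auto
      qed
    qed
  qed
qed

lemma length_fn_basic:
  fixes G (structure)
  assumes "length_fn G T H l"
  shows "l \<in> borel_measurable (borel_of T)" "\<And>x. x \<in> carrier G \<Longrightarrow> 0 \<le> l x" "l \<one> = 0"
    "\<And>x. x \<in> carrier G \<Longrightarrow> l (inv x) = l x"
    "\<And>x y. x \<in> carrier G \<Longrightarrow> y \<in> carrier G \<Longrightarrow> l (x \<otimes> y) \<le> l x + l y"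
    "\<And>h. h \<in> H \<Longrightarrow> l h = 0"
  using assms unfolding length_fn_def by auto

lemma length_fn_Hinv:
  fixes G (structure)
  assumes "length_fn G T H l" "group G" "subgroup H G" "h \<in> H" "x \<in> carrier G"
  shows "l (h \<otimes> x) = l x" "l (x \<otimes> h) = l x"
proof -
  interpret group G by fact
  note b = length_fn_basic[OF assms(1)]
  have hc: "h \<in> carrier G" "inv h \<in> carrier G" "inv h \<in> H"
    using subgroup.mem_carrier[OF assms(3,4)] subgroup.m_inv_closed[OF assms(3,4)] by auto
  have "l (h \<otimes> x) \<le> l x" using b(5)[of h x] b(6)[OF assms(4)] hc assms by simp
  moreover have "l x \<le> l (h \<otimes> x)"
  proof -
    have "x = inv h \<otimes> (h \<otimes> x)" using hc assms by (simp add: m_assoc[symmetric])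
    then have "l x \<le> l (inv h) + l (h \<otimes> x)" using b(5)[of "inv h" "h \<otimes> x"] hc assms by simp
    then show ?thesis using b(6)[OF hc(3)] by simp
  qed
  ultimately show "l (h \<otimes> x) = l x" by simp
  have "l (x \<otimes> h) \<le> l x" using b(5)[of x h] b(6)[OF assms(4)] hc assms by simp
  moreover have "l x \<le> l (x \<otimes> h)"
  proof -
    have "x = (x \<otimes> h) \<otimes> inv h" using hc assms by (simp add: m_assoc)
    then have "l x \<le> l (x \<otimes> h) + l (inv h)" using b(5)[of "x \<otimes> h" "inv h"] hc assms by simp
    then show ?thesis using b(6)[OF hc(3)] by simp
  qed
  ultimately show "l (x \<otimes> h) = l x" by simp
qed

lemma length_fn_coset:
  fixes G (structure)
  assumes "length_fn G T H l" "group G" "subgroup H G" "C \<in> rcosets H" "y \<in> C"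
  shows "l y = l (coset_rep G H C)"
proof -
  interpret group G by fact
  have "C = H #> y" using rcos_mem_eq[OF assms(2,3,4,5)] .
  moreover have yc: "y \<in> carrier G" using assms rcosets_subset by blast
  ultimately obtain h where "h \<in> H" "coset_rep G H C = h \<otimes> y" using coset_rep_coset[OF assms(2,3)] by metis
  then show ?thesis using length_fn_Hinv[OF assms(1,2,3) _ yc] by simp
qed

section \<open>Upper semicontinuous regularisation\<close>

definition lreg :: "'a topology \<Rightarrow> ('a \<Rightarrow> real) \<Rightarrow> 'a \<Rightarrow> real" where
  "lreg T l x = Inf {b. \<exists>U. openin T U \<and> x \<in> U \<and> (\<forall>y\<in>U. l y \<le> b)}"

locale rdsetting =
  fixes G (structure) and T H l
  assumes lcg: "lc_group G T" and sg: "subgroup H G" and cl: "closedin T H"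
    and len: "length_fn G T H l" and lb: "locally_bounded_len G T H l"
begin

lemma grp: "group G" using lcg_basic[OF lcg] by simp
lemma ts: "topspace T = carrier G" using lcg_basic[OF lcg] by simp

lemma local_bound:
  assumes "x \<in> carrier G"
  shows "\<exists>U b. openin T U \<and> x \<in> U \<and> (\<forall>y\<in>U. l y \<le> b)"
proof -
  interpret group G by (rule grp)
  obtain U L where UL: "openin T U" "compactin T L" "x \<in> U" "U \<subseteq> L"
    using lcg_basic(4)[OF lcg] assms ts unfolding locally_compact_space_def by metis
  have "compactin (quot_top G T H) ((\<lambda>y. H #> y) ` L)"
    using image_compactin[OF UL(2) lcg_quot_cont[OF lcg sg]] .
  then obtain B where B: "\<forall>C\<in>(\<lambda>y. H #> y) ` L. l (coset_rep G H C) \<le> B"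
    using lb unfolding locally_bounded_len_def by blast
  have "\<forall>y\<in>U. l y \<le> B"
  proof
    fix y assume "y \<in> U"
    then have y: "y \<in> L" "y \<in> carrier G" using UL ts compactin_subset_topspace by blast+
    have C: "H #> y \<in> rcosets H" by (rule rcosetsI[OF subgroup.subset[OF sg] y(2)])
    have "l y = l (coset_rep G H (H #> y))"
      by (rule length_fn_coset[OF len grp sg C rcos_self[OF y(2) sg]])
    then show "l y \<le> B" using B y by auto
  qed
  then show ?thesis using UL by blast
qed

lemma lreg_set_ne: "x \<in> carrier G \<Longrightarrow> {b. \<exists>U. openin T U \<and> x \<in> U \<and> (\<forall>y\<in>U. l y \<le> b)} \<noteq> {}"
  using local_bound by blast

lemma lreg_set_bdd: "bdd_below {b. \<exists>U. openin T U \<and> x \<in> U \<and> (\<forall>y\<in>U. l y \<le> b)}"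
  unfolding bdd_below_def by (rule exI[of _ "l x"]) auto

lemma lreg_ge: "x \<in> carrier G \<Longrightarrow> l x \<le> lreg T l x"
  unfolding lreg_def by (rule cInf_greatest[OF lreg_set_ne]) auto

lemma lreg_nonneg: "x \<in> carrier G \<Longrightarrow> 0 \<le> lreg T l x"
  using lreg_ge length_fn_basic(2)[OF len] by (meson order_trans)

lemma lreg_le: "openin T U \<Longrightarrow> x \<in> U \<Longrightarrow> (\<forall>y\<in>U. l y \<le> b) \<Longrightarrow> lreg T l x \<le> b"
  unfolding lreg_def by (rule cInf_lower[OF _ lreg_set_bdd]) auto

lemma lreg_lt:
  assumes "x \<in> carrier G" "lreg T l x < t"
  shows "\<exists>U b. openin T U \<and> x \<in> U \<and> (\<forall>y\<in>U. l y \<le> b) \<and> b < t"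
proof -
  from assms(2) obtain b where "b \<in> {b. \<exists>U. openin T U \<and> x \<in> U \<and> (\<forall>y\<in>U. l y \<le> b)}" "b < t"
    unfolding lreg_def using cInf_lessD[OF lreg_set_ne[OF assms(1)]] by blast
  then show ?thesis by blast
qed

lemma lreg_usc: "openin T {x \<in> carrier G. lreg T l x < t}"
proof (subst openin_subopen, intro ballI)
  fix x assume x: "x \<in> {x \<in> carrier G. lreg T l x < t}"
  then obtain U b where U: "openin T U" "x \<in> U" "\<forall>y\<in>U. l y \<le> b" "b < t" using lreg_lt by blast
  have "U \<subseteq> {x \<in> carrier G. lreg T l x < t}"
  proof
    fix z assume "z \<in> U"
    then have "lreg T l z \<le> b" "z \<in> carrier G" using lreg_le[OF U(1) _ U(3)] openin_subset[OF U(1)] ts by auto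
    then show "z \<in> {x \<in> carrier G. lreg T l x < t}" using U(4) by auto
  qed
  then show "\<exists>T'. openin T T' \<and> x \<in> T' \<and> T' \<subseteq> {x \<in> carrier G. lreg T l x < t}" using U by blast
qed

lemma lreg_subadd:
  assumes x: "x \<in> carrier G" and y: "y \<in> carrier G"
  shows "lreg T l (x \<otimes> y) \<le> lreg T l x + lreg T l y"
proof -
  interpret group G by (rule grp)
  have key: "lreg T l (x \<otimes> y) \<le> b1 + b2"
    if "openin T U" "x \<in> U" "\<forall>z\<in>U. l z \<le> b1" "openin T V" "y \<in> V" "\<forall>z\<in>V. l z \<le> b2" for U V b1 b2
  proof (rule lreg_le)
    have Uc: "U \<subseteq> carrier G" "V \<subseteq> carrier G" using that openin_subset ts by blast+
    show "openin T (\<Union>u\<in>U. (\<lambda>v. u \<otimes> v) ` V)"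
      using lcg_ltrans_open[OF lcg _ that(4)] Uc by (auto intro!: openin_Union)
    show "x \<otimes> y \<in> (\<Union>u\<in>U. (\<lambda>v. u \<otimes> v) ` V)" using that by blast
    show "\<forall>z\<in>(\<Union>u\<in>U. (\<lambda>v. u \<otimes> v) ` V). l z \<le> b1 + b2"
    proof
      fix z assume "z \<in> (\<Union>u\<in>U. (\<lambda>v. u \<otimes> v) ` V)"
      then obtain u v where uv: "u \<in> U" "v \<in> V" "z = u \<otimes> v" by blast
      then have "l z \<le> l u + l v" using length_fn_basic(5)[OF len] Uc by blast
      then show "l z \<le> b1 + b2" using that uv by fastforce
    qed
  qed
  define S where "S z = {b. \<exists>U. openin T U \<and> z \<in> U \<and> (\<forall>y\<in>U. l y \<le> b)}" for z
  have "\<forall>b2\<in>S y. lreg T l (x \<otimes> y) - b2 \<le> lreg T l x"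
  proof
    fix b2 assume "b2 \<in> S y"
    then obtain V where V: "openin T V" "y \<in> V" "\<forall>z\<in>V. l z \<le> b2" unfolding S_def by blast
    have "lreg T l (x \<otimes> y) - b2 \<le> b1" if "b1 \<in> S x" for b1
      using that key[OF _ _ _ V] unfolding S_def by fastforce
    then show "lreg T l (x \<otimes> y) - b2 \<le> lreg T l x"
      unfolding lreg_def S_def[symmetric] using lreg_set_ne[OF x] unfolding S_def
      by (intro cInf_greatest) auto
  qed
  then have "\<forall>b2\<in>S y. lreg T l (x \<otimes> y) - lreg T l x \<le> b2" by auto
  then have "lreg T l (x \<otimes> y) - lreg T l x \<le> lreg T l y"
    unfolding lreg_def[of T l y] S_def[symmetric] using lreg_set_ne[OF y] unfolding S_def
    by (intro cInf_greatest) auto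
  then show ?thesis by simp
qed


lemma lreg_set_map:
  assumes f_open: "\<And>U. openin T U \<Longrightarrow> openin T (f ` U)"
    and f_l: "\<And>z. z \<in> carrier G \<Longrightarrow> l (f z) \<le> l z"
  shows "{b. \<exists>U. openin T U \<and> x \<in> U \<and> (\<forall>y\<in>U. l y \<le> b)} \<subseteq> {b. \<exists>U. openin T U \<and> f x \<in> U \<and> (\<forall>y\<in>U. l y \<le> b)}"
proof
  fix b assume "b \<in> {b. \<exists>U. openin T U \<and> x \<in> U \<and> (\<forall>y\<in>U. l y \<le> b)}"
  then obtain U where U: "openin T U" "x \<in> U" "\<forall>y\<in>U. l y \<le> b" by blast
  have "\<forall>y\<in>f ` U. l y \<le> b"
  proof
    fix y assume "y \<in> f ` U"
    then obtain z where "z \<in> U" "y = f z" by blast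
    moreover have "z \<in> carrier G" using \<open>z \<in> U\<close> openin_subset[OF U(1)] ts by blast
    ultimately show "l y \<le> b" using f_l U(3) by fastforce
  qed
  then show "b \<in> {b. \<exists>U. openin T U \<and> f x \<in> U \<and> (\<forall>y\<in>U. l y \<le> b)}"
    using U f_open by blast
qed

lemma lreg_map_le:
  assumes "x \<in> carrier G" "f x \<in> carrier G" "\<And>U. openin T U \<Longrightarrow> openin T (f ` U)"
    "\<And>z. z \<in> carrier G \<Longrightarrow> l (f z) \<le> l z"
  shows "lreg T l (f x) \<le> lreg T l x"
  unfolding lreg_def
  by (rule cInf_superset_mono[OF lreg_set_ne[OF assms(1)] lreg_set_bdd lreg_set_map[OF assms(3,4)]])

lemma lreg_inv: "x \<in> carrier G \<Longrightarrow> lreg T l (inv x) = lreg T l x"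
proof -
  interpret group G by (rule grp)
  assume x: "x \<in> carrier G"
  have a: "lreg T l (inv z) \<le> lreg T l z" if "z \<in> carrier G" for z
    using lreg_map_le[of z "\<lambda>y. inv y"] that lcg_inv_open[OF lcg] length_fn_basic(4)[OF len] by auto
  show ?thesis using a[OF x] a[of "inv x"] x by simp
qed

lemma lreg_Hinv:
  assumes h: "h \<in> H" and x: "x \<in> carrier G"
  shows "lreg T l (h \<otimes> x) = lreg T l x" "lreg T l (x \<otimes> h) = lreg T l x"
proof -
  interpret group G by (rule grp)
  have hc: "h \<in> carrier G" "inv h \<in> H" "inv h \<in> carrier G"
    using subgroup.mem_carrier[OF sg h] subgroup.m_inv_closed[OF sg h] by auto
  have a: "lreg T l (g \<otimes> z) \<le> lreg T l z" if "z \<in> carrier G" "g \<in> H" for z g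
    using lreg_map_le[of z "\<lambda>y. g \<otimes> y"] that lcg_ltrans_open[OF lcg] length_fn_Hinv(1)[OF len grp sg]
      subgroup.mem_carrier[OF sg] by auto
  have "lreg T l (inv h \<otimes> (h \<otimes> x)) \<le> lreg T l (h \<otimes> x)" using a[of "h \<otimes> x" "inv h"] hc x by simp
  then show "lreg T l (h \<otimes> x) = lreg T l x" using a[OF x h] hc x by (simp add: m_assoc[symmetric])
  have b: "lreg T l (z \<otimes> g) \<le> lreg T l z" if "z \<in> carrier G" "g \<in> H" for z g
    using lreg_map_le[of z "\<lambda>y. y \<otimes> g"] that lcg_rtrans_open[OF lcg] length_fn_Hinv(2)[OF len grp sg]
      subgroup.mem_carrier[OF sg] by auto
  have "lreg T l ((x \<otimes> h) \<otimes> inv h) \<le> lreg T l (x \<otimes> h)" using b[of "x \<otimes> h" "inv h"] hc x by simp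
  then show "lreg T l (x \<otimes> h) = lreg T l x" using b[OF x h] hc x by (simp add: m_assoc)
qed

end

definition lmod :: "'a topology \<Rightarrow> 'a set \<Rightarrow> ('a \<Rightarrow> real) \<Rightarrow> 'a \<Rightarrow> real" where
  "lmod T H l x = (if x \<in> H then 0 else lreg T l x)"

context rdsetting
begin

lemma lreg_compact_bound:
  assumes K: "compactin (quot_top G T H) K"
  shows "\<exists>B. \<forall>C\<in>K. lreg T l (coset_rep G H C) \<le> B"
proof -
  interpret group G by (rule grp)
  let ?Q = "quot_top G T H"
  have tsQ: "topspace ?Q = rcosets H" using topspace_quot_top[OF grp sg ts] .
  have "\<forall>C\<in>K. \<exists>p. openin ?Q (fst p) \<and> C \<in> fst p \<and> (\<forall>C'\<in>fst p. lreg T l (coset_rep G H C') \<le> snd p)"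
  proof
    fix C assume "C \<in> K"
    then have C: "C \<in> rcosets H" using compactin_subset_topspace[OF K] tsQ by blast
    let ?x = "coset_rep G H C"
    have x: "?x \<in> carrier G" "C = H #> ?x" using coset_rep[OF grp sg C] by auto
    obtain U b where U: "openin T U" "?x \<in> U" "\<forall>y\<in>U. l y \<le> b" using local_bound[OF x(1)] by blast
    have Uc: "U \<subseteq> carrier G" using openin_subset[OF U(1)] ts by simp
    have "\<forall>C'\<in>(\<lambda>y. H #> y) ` U. lreg T l (coset_rep G H C') \<le> b"
    proof
      fix C' assume "C' \<in> (\<lambda>y. H #> y) ` U"
      then obtain u where u: "u \<in> U" "C' = H #> u" by blast
      obtain h where h: "h \<in> H" "coset_rep G H (H #> u) = h \<otimes> u"
        using coset_rep_coset[OF grp sg] u Uc by blast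
      have "lreg T l (coset_rep G H C') = lreg T l u" using u h lreg_Hinv(1)[OF h(1)] Uc by auto
      also have "\<dots> \<le> b" using lreg_le[OF U(1) u(1) U(3)] .
      finally show "lreg T l (coset_rep G H C') \<le> b" .
    qed
    moreover have "openin ?Q ((\<lambda>y. H #> y) ` U)" using lcg_quot_open[OF lcg sg U(1)] .
    moreover have "C \<in> (\<lambda>y. H #> y) ` U" using x U(2) by blast
    ultimately show "\<exists>p. openin ?Q (fst p) \<and> C \<in> fst p \<and> (\<forall>C'\<in>fst p. lreg T l (coset_rep G H C') \<le> snd p)"
      by (intro exI[of _ "((\<lambda>y. H #> y) ` U, b)"]) simp
  qed
  then have "\<exists>p. \<forall>C\<in>K. openin ?Q (fst (p C)) \<and> C \<in> fst (p C) \<and>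
      (\<forall>C'\<in>fst (p C). lreg T l (coset_rep G H C') \<le> snd (p C))" by (rule bchoice)
  then obtain p where p: "\<forall>C\<in>K. openin ?Q (fst (p C)) \<and> C \<in> fst (p C) \<and>
      (\<forall>C'\<in>fst (p C). lreg T l (coset_rep G H C') \<le> snd (p C))" ..
  have "\<exists>F. finite F \<and> F \<subseteq> (\<lambda>C. fst (p C)) ` K \<and> K \<subseteq> \<Union>F"
  proof -
    have cov: "\<forall>U\<in>(\<lambda>C. fst (p C)) ` K. openin ?Q U" "K \<subseteq> \<Union>((\<lambda>C. fst (p C)) ` K)" using p by auto
    have "\<forall>\<U>. (\<forall>U\<in>\<U>. openin ?Q U) \<and> K \<subseteq> \<Union>\<U> \<longrightarrow> (\<exists>\<F>. finite \<F> \<and> \<F> \<subseteq> \<U> \<and> K \<subseteq> \<Union>\<F>)"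
      using K unfolding compactin_def by (rule conjunct2)
    from spec[OF this, of "(\<lambda>C. fst (p C)) ` K"] cov show ?thesis by blast
  qed
  then obtain F where F: "finite F" "F \<subseteq> (\<lambda>C. fst (p C)) ` K" "K \<subseteq> \<Union>F" by blast
  then obtain K0 where K0: "K0 \<subseteq> K" "finite K0" "F = (\<lambda>C. fst (p C)) ` K0"
    by (metis finite_subset_image)
  define B where "B = Max (insert 0 ((\<lambda>C. snd (p C)) ` K0))"
  have "\<forall>C\<in>K. lreg T l (coset_rep G H C) \<le> B"
  proof
    fix C assume "C \<in> K"
    then obtain C0 where C0: "C0 \<in> K0" "C \<in> fst (p C0)" using F K0 by blast
    then have "lreg T l (coset_rep G H C) \<le> snd (p C0)" using p K0 by blast
    also have "\<dots> \<le> B" unfolding B_def using K0 C0 by (intro Max_ge) auto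
    finally show "lreg T l (coset_rep G H C) \<le> B" .
  qed
  then show ?thesis by blast
qed

lemma lmod_nonneg: "x \<in> carrier G \<Longrightarrow> 0 \<le> lmod T H l x"
  unfolding lmod_def using lreg_nonneg by auto

lemma lmod_le_lreg: "x \<in> carrier G \<Longrightarrow> lmod T H l x \<le> lreg T l x"
  unfolding lmod_def using lreg_nonneg by auto

lemma lmod_ge: "x \<in> carrier G \<Longrightarrow> l x \<le> lmod T H l x"
  unfolding lmod_def using lreg_ge length_fn_basic(6)[OF len] by auto

lemma lmod_H: "h \<in> H \<Longrightarrow> lmod T H l h = 0"
  unfolding lmod_def by simp

lemma lmod_Hinv:
  assumes h: "h \<in> H" and x: "x \<in> carrier G"
  shows "lmod T H l (h \<otimes> x) = lmod T H l x" "lmod T H l (x \<otimes> h) = lmod T H l x"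
proof -
  interpret group G by (rule grp)
  have hc: "h \<in> carrier G" "inv h \<in> H" using subgroup.mem_carrier[OF sg h] subgroup.m_inv_closed[OF sg h] by auto
  have "h \<otimes> x \<in> H \<longleftrightarrow> x \<in> H"
  proof
    assume "h \<otimes> x \<in> H"
    then have "inv h \<otimes> (h \<otimes> x) \<in> H" using hc subgroup.m_closed[OF sg] by blast
    then show "x \<in> H" using hc x by (simp add: m_assoc[symmetric])
  qed (use h subgroup.m_closed[OF sg] in blast)
  then show "lmod T H l (h \<otimes> x) = lmod T H l x" unfolding lmod_def using lreg_Hinv(1)[OF h x] by simp
  have "x \<otimes> h \<in> H \<longleftrightarrow> x \<in> H"
  proof
    assume "x \<otimes> h \<in> H"
    then have "(x \<otimes> h) \<otimes> inv h \<in> H" using hc subgroup.m_closed[OF sg] by blast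
    then show "x \<in> H" using hc x by (simp add: m_assoc)
  qed (use h subgroup.m_closed[OF sg] in blast)
  then show "lmod T H l (x \<otimes> h) = lmod T H l x" unfolding lmod_def using lreg_Hinv(2)[OF h x] by simp
qed

lemma lmod_inv: "x \<in> carrier G \<Longrightarrow> lmod T H l (inv x) = lmod T H l x"
proof -
  interpret group G by (rule grp)
  assume x: "x \<in> carrier G"
  have "inv x \<in> H \<longleftrightarrow> x \<in> H" using x subgroup.m_inv_closed[OF sg] by (metis inv_inv)
  then show ?thesis unfolding lmod_def using lreg_inv[OF x] by simp
qed

lemma lmod_subadd:
  assumes x: "x \<in> carrier G" and y: "y \<in> carrier G"
  shows "lmod T H l (x \<otimes> y) \<le> lmod T H l x + lmod T H l y"
proof -
  interpret group G by (rule grp)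
  show ?thesis
  proof (cases "x \<otimes> y \<in> H")
    case True then show ?thesis using lmod_nonneg x y lmod_H by (simp add: add_nonneg_nonneg)
  next
    case xy: False
    show ?thesis
    proof (cases "x \<in> H")
      case True
      then show ?thesis using lmod_Hinv(1)[OF True y] lmod_H[OF True] by simp
    next
      case xH: False
      show ?thesis
      proof (cases "y \<in> H")
        case True
        then show ?thesis using lmod_Hinv(2)[OF True x] lmod_H[OF True] by simp
      next
        case False
        then show ?thesis using xH xy lreg_subadd[OF x y] unfolding lmod_def by simp
      qed
    qed
  qed
qed

lemma lmod_compact_bound:
  assumes K: "compactin (quot_top G T H) K"
  shows "\<exists>B. \<forall>C\<in>K. lmod T H l (coset_rep G H C) \<le> B"
proof -
  obtain B where B: "\<forall>C\<in>K. lreg T l (coset_rep G H C) \<le> B" using lreg_compact_bound[OF K] by blast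
  have "\<forall>C\<in>K. lmod T H l (coset_rep G H C) \<le> B"
  proof
    fix C assume "C \<in> K"
    then have "C \<in> rcosets H" using compactin_subset_topspace[OF K] topspace_quot_top[OF grp sg ts] by blast
    then have "coset_rep G H C \<in> carrier G" using coset_rep[OF grp sg] by blast
    then show "lmod T H l (coset_rep G H C) \<le> B" using lmod_le_lreg B \<open>C \<in> K\<close> by (meson order_trans)
  qed
  then show ?thesis by blast
qed

lemma lmod_measurable:
  assumes K: "subgroup K G" "K \<subseteq> H"
  shows "(\<lambda>C. lmod T H l (coset_rep G K C)) \<in> borel_measurable (borel_of (quot_top G T K))"
proof (rule borel_measurableI_less)
  interpret group G by (rule grp)
  let ?Q = "quot_top G T K"
  have tsQ: "topspace ?Q = rcosets K" using topspace_quot_top[OF grp K(1) ts] .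
  fix t :: real
  have repK: "\<And>C. C \<in> rcosets K \<Longrightarrow> coset_rep G K C \<in> carrier G \<and> C = K #> coset_rep G K C \<and> coset_rep G K C \<in> C"
    using coset_rep[OF grp K(1)] by blast
  have repH: "coset_rep G K C \<in> H \<longleftrightarrow> C \<subseteq> H" if C: "C \<in> rcosets K" for C
  proof
    assume r: "coset_rep G K C \<in> H"
    show "C \<subseteq> H"
    proof
      fix z assume "z \<in> C"
      then obtain k where "k \<in> K" "z = k \<otimes> coset_rep G K C" using repK[OF C] unfolding r_coset_def by blast
      then show "z \<in> H" using r K subgroup.m_closed[OF sg] by blast
    qed
  qed (use repK[OF that] in blast)
  have ltH: "lmod T H l (coset_rep G K C) = lmod T H l x" if C: "C \<in> rcosets K" "x \<in> C" for C x
  proof -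
    have xc: "x \<in> carrier G" using C rcosets_subset[OF grp K(1)] by blast
    have "C = K #> x" using rcos_mem_eq[OF grp K(1) C] .
    then obtain k where "k \<in> K" "coset_rep G K C = k \<otimes> x" using coset_rep_coset[OF grp K(1) xc] by metis
    then show ?thesis using lmod_Hinv(1)[of k x] K xc by auto
  qed
  have ltreg: "lreg T l (coset_rep G K C) = lreg T l x" if C: "C \<in> rcosets K" "x \<in> C" for C x
  proof -
    have xc: "x \<in> carrier G" using C rcosets_subset[OF grp K(1)] by blast
    have "C = K #> x" using rcos_mem_eq[OF grp K(1) C] .
    then obtain k where "k \<in> K" "coset_rep G K C = k \<otimes> x" using coset_rep_coset[OF grp K(1) xc] by metis
    then show ?thesis using lreg_Hinv(1)[of k x] K xc by auto
  qed
  show "{C \<in> space (borel_of ?Q). lmod T H l (coset_rep G K C) < t} \<in> sets (borel_of ?Q)"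
  proof (cases "t \<le> 0")
    case True
    have "{C \<in> space (borel_of ?Q). lmod T H l (coset_rep G K C) < t} = {}"
    proof -
      have "\<not> lmod T H l (coset_rep G K C) < t" if "C \<in> rcosets K" for C
        using True lmod_nonneg[of "coset_rep G K C"] repK[OF that] by linarith
      then show "{C \<in> space (borel_of ?Q). lmod T H l (coset_rep G K C) < t} = {}" using tsQ by auto
    qed
    then show ?thesis by (metis sets.empty_sets)
  next
    case False
    define A where "A = {C \<in> rcosets K. C \<subseteq> H}"
    define B where "B = {C \<in> rcosets K. lreg T l (coset_rep G K C) < t}"
    have eq: "{C \<in> space (borel_of ?Q). lmod T H l (coset_rep G K C) < t} = A \<union> B"
      using False repH unfolding A_def B_def lmod_def tsQ space_borel_of by auto
    have "closedin ?Q A"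
      unfolding closedin_def
    proof
      show "A \<subseteq> topspace ?Q" unfolding A_def tsQ by blast
      have "\<Union>(topspace ?Q - A) = carrier G - H"
      proof (rule Set.set_eqI, rule iffI)
        fix x assume "x \<in> \<Union>(topspace ?Q - A)"
        then obtain C where C: "C \<in> rcosets K" "\<not> C \<subseteq> H" "x \<in> C" unfolding A_def tsQ by blast
        have "x \<in> carrier G" using C rcosets_subset[OF grp K(1)] by blast
        moreover have "x \<notin> H"
        proof
          assume "x \<in> H"
          have "C = K #> x" using rcos_mem_eq[OF grp K(1) C(1,3)] .
          then have "C \<subseteq> H" using \<open>x \<in> H\<close> K subgroup.m_closed[OF sg] unfolding r_coset_def by blast
          then show False using C by blast
        qed
        ultimately show "x \<in> carrier G - H" by blast
      next
        fix x assume x: "x \<in> carrier G - H"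
        have "K #> x \<in> rcosets K" using rcosetsI[OF subgroup.subset[OF K(1)]] x by blast
        moreover have "x \<in> K #> x" using rcos_self[OF _ K(1)] x by blast
        ultimately show "x \<in> \<Union>(topspace ?Q - A)" using x unfolding A_def tsQ by blast
      qed
      moreover have "openin T (carrier G - H)" using cl ts by (simp add: closedin_def)
      ultimately show "openin ?Q (topspace ?Q - A)" using openin_quot_top[OF grp K(1)] tsQ by simp
    qed
    moreover have "openin ?Q B"
    proof -
      have "\<Union>B = {x \<in> carrier G. lreg T l x < t}"
      proof (rule Set.set_eqI, rule iffI)
        fix x assume "x \<in> \<Union>B"
        then obtain C where C: "C \<in> rcosets K" "x \<in> C" "lreg T l (coset_rep G K C) < t" unfolding B_def by blast
        then show "x \<in> {x \<in> carrier G. lreg T l x < t}"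
          using ltreg[OF C(1,2)] rcosets_subset[OF grp K(1) C(1)] by auto
      next
        fix x assume x: "x \<in> {x \<in> carrier G. lreg T l x < t}"
        have C: "K #> x \<in> rcosets K" using rcosetsI[OF subgroup.subset[OF K(1)]] x by blast
        moreover have xx: "x \<in> K #> x" using rcos_self[OF _ K(1)] x by blast
        have "K #> x \<in> B" unfolding B_def using C x ltreg[OF C xx] by simp
        then show "x \<in> \<Union>B" using xx by blast
      qed
      moreover have "B \<subseteq> rcosets K" unfolding B_def by blast
      ultimately show ?thesis using openin_quot_top[OF grp K(1)] lreg_usc by simp
    qed
    ultimately show ?thesis unfolding eq
      using closedin_borel_of openin_borel_of by blast
  qed
qed

end

section \<open>Transport of measures along measurable bijections\<close>

locale mbij =
  fixes M :: "'x measure" and N :: "'y measure" and \<phi> :: "'x \<Rightarrow> 'y" and \<psi> :: "'y \<Rightarrow> 'x" and N' :: "'y measure"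
  assumes phi: "\<phi> \<in> M \<rightarrow>\<^sub>M N'" and psi: "\<psi> \<in> N' \<rightarrow>\<^sub>M M"
    and inv1: "\<And>x. x \<in> space M \<Longrightarrow> \<psi> (\<phi> x) = x"
    and inv2: "\<And>y. y \<in> space N' \<Longrightarrow> \<phi> (\<psi> y) = y"
    and N_def: "N = distr M N' \<phi>"
begin

lemma space_N: "space N = space N'" and sets_N: "sets N = sets N'"
  unfolding N_def by simp_all

lemma bm_N: "borel_measurable N = borel_measurable N'"
  by (rule measurable_cong_sets[OF sets_N refl])

lemma meas_iff: "f \<in> borel_measurable N \<longleftrightarrow> (\<lambda>x. f (\<phi> x)) \<in> borel_measurable M"
proof
  assume "f \<in> borel_measurable N"
  then have "f \<in> borel_measurable N'" using bm_N by metis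
  then show "(\<lambda>x. f (\<phi> x)) \<in> borel_measurable M" using measurable_compose[OF phi] by blast
next
  assume "(\<lambda>x. f (\<phi> x)) \<in> borel_measurable M"
  then have "(\<lambda>y. f (\<phi> (\<psi> y))) \<in> borel_measurable N'" using measurable_compose[OF psi] by blast
  then have "f \<in> borel_measurable N'" using measurable_cong[of N' "\<lambda>y. f (\<phi> (\<psi> y))" f] inv2 by simp
  then show "f \<in> borel_measurable N" using bm_N by metis
qed

lemma integrable_iff:
  fixes f :: "'y \<Rightarrow> 'c::{banach, second_countable_topology}"
  shows "integrable N f \<longleftrightarrow> integrable M (\<lambda>x. f (\<phi> x))"
proof (cases "f \<in> borel_measurable N")
  case True
  then have fm: "f \<in> borel_measurable N'" using bm_N by metis
  show ?thesis unfolding N_def by (rule integrable_distr_eq[OF phi fm])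
next
  case False
  then have "\<not> integrable N f" "\<not> integrable M (\<lambda>x. f (\<phi> x))"
    using meas_iff borel_measurable_integrable by metis+
  then show ?thesis by simp
qed

lemma integral_eq:
  fixes f :: "'y \<Rightarrow> 'c::{banach, second_countable_topology}"
  shows "integral\<^sup>L N f = integral\<^sup>L M (\<lambda>x. f (\<phi> x))"
proof (cases "f \<in> borel_measurable N")
  case True
  then have fm: "f \<in> borel_measurable N'" using bm_N by metis
  show ?thesis unfolding N_def by (rule integral_distr[OF phi fm])
next
  case False
  then have "\<not> integrable N f" "\<not> integrable M (\<lambda>x. f (\<phi> x))"
    using meas_iff borel_measurable_integrable by metis+
  then show ?thesis using not_integrable_integral_eq by metis
qed

lemma phi_space: "x \<in> space M \<Longrightarrow> \<phi> x \<in> space N'"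
  by (rule measurable_space[OF phi])

lemma psi_space: "y \<in> space N' \<Longrightarrow> \<psi> y \<in> space M"
  by (rule measurable_space[OF psi])

lemma preimage_eq: "B \<subseteq> space N' \<Longrightarrow> \<phi> -` B \<inter> space M = \<psi> ` B"
proof (rule Set.set_eqI, rule iffI)
  fix x assume B: "B \<subseteq> space N'" and "x \<in> \<phi> -` B \<inter> space M"
  then show "x \<in> \<psi> ` B" using inv1 by (metis IntD1 IntD2 image_eqI vimageE)
next
  fix x assume B: "B \<subseteq> space N'" and "x \<in> \<psi> ` B"
  then obtain y where "y \<in> B" "x = \<psi> y" by blast
  then show "x \<in> \<phi> -` B \<inter> space M" using B inv2 psi_space by auto
qed

lemma emeasure_eq:
  assumes B: "B \<subseteq> space N'"
  shows "emeasure N B = emeasure M (\<psi> ` B)"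
proof (cases "B \<in> sets N'")
  case True
  then show ?thesis unfolding N_def using emeasure_distr[OF phi True] preimage_eq[OF B] by simp
next
  case False
  have "\<psi> ` B \<notin> sets M"
  proof
    assume "\<psi> ` B \<in> sets M"
    then have "\<psi> -` (\<psi> ` B) \<inter> space N' \<in> sets N'" using psi measurable_sets by blast
    moreover have "\<psi> -` (\<psi> ` B) \<inter> space N' = B"
    proof (rule Set.set_eqI, rule iffI)
      fix y assume "y \<in> \<psi> -` (\<psi> ` B) \<inter> space N'"
      then obtain z where "z \<in> B" "\<psi> y = \<psi> z" "y \<in> space N'" by blast
      then show "y \<in> B" using inv2 B by (metis subsetD)
    qed (use B in blast)
    ultimately show False using False by simp
  qed
  then show ?thesis using False emeasure_notin_sets sets_N by metis
qed

lemma sets_image: "B \<in> sets N' \<Longrightarrow> \<psi> ` B \<in> sets M"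
  using preimage_eq[of B] measurable_sets[OF phi] sets.sets_into_space by metis

end

section \<open>Abstract isomorphism of coset spaces\<close>

locale hiso_loc =
  fixes G :: "('a, 'b) monoid_scheme" and T H and G2 :: "('c, 'd) monoid_scheme" and T2 H2
    and \<phi> :: "'a set \<Rightarrow> 'c set" and \<psi> :: "'c set \<Rightarrow> 'a set" and \<pi> :: "'a \<Rightarrow> 'c"
  assumes grp1: "group G" and grp2: "group G2" and sg1: "subgroup H G" and sg2: "subgroup H2 G2"
    and ts1: "topspace T = carrier G" and ts2: "topspace T2 = carrier G2"
    and bij1: "\<And>C. C \<in> rcosets\<^bsub>G\<^esub> H \<Longrightarrow> \<phi> C \<in> rcosets\<^bsub>G2\<^esub> H2"
      "\<And>C. C \<in> rcosets\<^bsub>G\<^esub> H \<Longrightarrow> \<psi> (\<phi> C) = C"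
    and bij2: "\<And>C. C \<in> rcosets\<^bsub>G2\<^esub> H2 \<Longrightarrow> \<psi> C \<in> rcosets\<^bsub>G\<^esub> H"
      "\<And>C. C \<in> rcosets\<^bsub>G2\<^esub> H2 \<Longrightarrow> \<phi> (\<psi> C) = C"
    and cont1: "continuous_map (quot_top G T H) (quot_top G2 T2 H2) \<phi>"
    and cont2: "continuous_map (quot_top G2 T2 H2) (quot_top G T H) \<psi>"
    and pi_carrier: "\<And>g. g \<in> carrier G \<Longrightarrow> \<pi> g \<in> carrier G2"
    and compat: "\<And>C g. C \<in> rcosets\<^bsub>G\<^esub> H \<Longrightarrow> g \<in> carrier G \<Longrightarrow> \<phi> (C #>\<^bsub>G\<^esub> g) = \<phi> C #>\<^bsub>G2\<^esub> \<pi> g"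
      "\<And>C g. C \<in> rcosets\<^bsub>G\<^esub> H \<Longrightarrow> g \<in> carrier G \<Longrightarrow>
         \<phi> (C #>\<^bsub>G\<^esub> inv\<^bsub>G\<^esub> g) = \<phi> C #>\<^bsub>G2\<^esub> inv\<^bsub>G2\<^esub> (\<pi> g)"
    and surj: "\<And>g2. g2 \<in> carrier G2 \<Longrightarrow> \<exists>g\<in>carrier G. (g2 \<in> H2 \<longrightarrow> g \<in> H) \<and>
        (\<forall>C\<in>rcosets\<^bsub>G\<^esub> H. \<phi> (C #>\<^bsub>G\<^esub> g) = \<phi> C #>\<^bsub>G2\<^esub> g2)"
    and piH: "\<And>h. h \<in> H \<Longrightarrow> \<pi> h \<in> H2" and phiH: "\<phi> H = H2"
begin

abbreviation "X1 \<equiv> rcosets\<^bsub>G\<^esub> H"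
abbreviation "X2 \<equiv> rcosets\<^bsub>G2\<^esub> H2"
abbreviation "Q1 \<equiv> quot_top G T H"
abbreviation "Q2 \<equiv> quot_top G2 T2 H2"

lemma tsQ1: "topspace Q1 = X1" using topspace_quot_top[OF grp1 sg1 ts1] .
lemma tsQ2: "topspace Q2 = X2" using topspace_quot_top[OF grp2 sg2 ts2] .

lemma homeo: "homeomorphic_map Q1 Q2 \<phi>"
  unfolding homeomorphic_map_maps homeomorphic_maps_def
  using cont1 cont2 bij1 bij2 tsQ1 tsQ2 by blast

lemma homeo2: "homeomorphic_map Q2 Q1 \<psi>"
  unfolding homeomorphic_map_maps homeomorphic_maps_def
  using cont1 cont2 bij1 bij2 tsQ1 tsQ2 by blast

lemma psi_action:
  assumes C: "C \<in> X2" and g2: "g2 \<in> carrier G2" and g: "g \<in> carrier G"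
    and eq: "\<forall>C\<in>X1. \<phi> (C #>\<^bsub>G\<^esub> g) = \<phi> C #>\<^bsub>G2\<^esub> g2"
  shows "\<psi> (C #>\<^bsub>G2\<^esub> g2) = \<psi> C #>\<^bsub>G\<^esub> g"
proof -
  have "\<psi> C #>\<^bsub>G\<^esub> g \<in> X1" using rcosets_mult[OF grp1 sg1 bij2(1)[OF C] g] .
  moreover have "\<phi> (\<psi> C #>\<^bsub>G\<^esub> g) = C #>\<^bsub>G2\<^esub> g2" using eq bij2[OF C] by auto
  ultimately show ?thesis using bij1 by metis
qed

lemma quot_discrete_iff: "quot_discrete G T H \<longleftrightarrow> quot_discrete G2 T2 H2"
proof
  assume d: "quot_discrete G T H"
  show "quot_discrete G2 T2 H2" unfolding quot_discrete_def
  proof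
    fix C assume C: "C \<in> X2"
    have "openin Q1 {\<psi> C}" using d bij2(1)[OF C] unfolding quot_discrete_def by blast
    moreover have "{\<psi> C} \<subseteq> topspace Q1" using tsQ1 bij2(1)[OF C] by simp
    ultimately have "openin Q2 (\<phi> ` {\<psi> C})" using homeomorphic_map_openness[OF homeo] by blast
    then show "openin Q2 {C}" using bij2(2)[OF C] by simp
  qed
next
  assume d: "quot_discrete G2 T2 H2"
  show "quot_discrete G T H" unfolding quot_discrete_def
  proof
    fix C assume C: "C \<in> X1"
    have "openin Q2 {\<phi> C}" using d bij1(1)[OF C] unfolding quot_discrete_def by blast
    moreover have "{\<phi> C} \<subseteq> topspace Q2" using tsQ2 bij1(1)[OF C] by simp
    ultimately have "openin Q1 (\<psi> ` {\<phi> C})" using homeomorphic_map_openness[OF homeo2] by blast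
    then show "openin Q1 {C}" using bij1(2)[OF C] by simp
  qed
qed

end

lemma qm_discrete_open:
  assumes "group G" "subgroup H G" "topspace T = carrier G" "quot_discrete G T H" "U \<subseteq> rcosets\<^bsub>G\<^esub> H"
  shows "openin (quot_top G T H) U"
proof -
  have "U = \<Union>((\<lambda>C. {C}) ` U)" by blast
  moreover have "\<forall>V\<in>(\<lambda>C. {C}) ` U. openin (quot_top G T H) V"
    using assms(4,5) unfolding quot_discrete_def by blast
  ultimately show ?thesis by (metis openin_Union)
qed

lemma qm_discrete_compact:
  assumes "group G" "subgroup H G" "topspace T = carrier G" "quot_discrete G T H"
    "compactin (quot_top G T H) K"
  shows "finite K"
proof -
  have K: "K \<subseteq> rcosets\<^bsub>G\<^esub> H" using compactin_subset_topspace[OF assms(5)] topspace_quot_top[OF assms(1-3)] by simp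
  have "\<forall>\<U>. (\<forall>U\<in>\<U>. openin (quot_top G T H) U) \<and> K \<subseteq> \<Union>\<U> \<longrightarrow> (\<exists>\<F>. finite \<F> \<and> \<F> \<subseteq> \<U> \<and> K \<subseteq> \<Union>\<F>)"
    using assms(5) unfolding compactin_def by (rule conjunct2)
  from spec[OF this, of "(\<lambda>C. {C}) ` K"] obtain F where F: "finite F" "F \<subseteq> (\<lambda>C. {C}) ` K" "K \<subseteq> \<Union>F"
    using assms(4) K unfolding quot_discrete_def by blast
  have "\<forall>A\<in>F. finite A" using F(2) by blast
  then have "finite (\<Union>F)" using F(1) by blast
  then show ?thesis using F(3) finite_subset by blast
qed

lemma qm_basic:
  assumes g: "group G" "subgroup H G" "topspace T = carrier G" and qm: "quot_measure G T H \<nu>"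
  shows "sets \<nu> = sets (borel_of (quot_top G T H))" "space \<nu> = rcosets\<^bsub>G\<^esub> H"
    "\<And>K. compactin (quot_top G T H) K \<Longrightarrow> emeasure \<nu> K < \<infinity>"
proof -
  have ts: "topspace (quot_top G T H) = rcosets\<^bsub>G\<^esub> H" using topspace_quot_top[OF g] .
  have "(sets \<nu> = sets (borel_of (quot_top G T H)) \<and> space \<nu> = rcosets\<^bsub>G\<^esub> H) \<and>
      (\<forall>K. compactin (quot_top G T H) K \<longrightarrow> emeasure \<nu> K < \<infinity>)"
  proof (cases "quot_discrete G T H")
    case True
    then have nu: "\<nu> = count_space (rcosets\<^bsub>G\<^esub> H)" using qm unfolding quot_measure_def by simp
    have "sets (borel_of (quot_top G T H)) = Pow (rcosets\<^bsub>G\<^esub> H)"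
      using sets_borel_of_discrete[of "quot_top G T H"] qm_discrete_open[OF g True] ts by simp
    moreover have "emeasure \<nu> K < \<infinity>" if "compactin (quot_top G T H) K" for K
    proof -
      have "finite K" "K \<subseteq> rcosets\<^bsub>G\<^esub> H"
        using qm_discrete_compact[OF g True that] compactin_subset_topspace[OF that] ts by auto
      then show ?thesis using nu emeasure_count_space_finite of_nat_less_top by simp
    qed
    ultimately show ?thesis using nu by simp
  next
    case False
    then have r: "radon_measure (quot_top G T H) \<nu>" using qm unfolding quot_measure_def by simp
    then have s: "sets \<nu> = sets (borel_of (quot_top G T H))" unfolding radon_measure_def by simp
    moreover have "space \<nu> = rcosets\<^bsub>G\<^esub> H" using sets_eq_imp_space_eq[OF s] ts by simp
    ultimately show ?thesis using r unfolding radon_measure_def by blast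
  qed
  then show "sets \<nu> = sets (borel_of (quot_top G T H))" "space \<nu> = rcosets\<^bsub>G\<^esub> H"
    "\<And>K. compactin (quot_top G T H) K \<Longrightarrow> emeasure \<nu> K < \<infinity>" by blast+
qed

context hiso_loc
begin

lemma mbij_inst:
  assumes qm: "quot_measure G T H \<nu>"
  shows "mbij \<nu> (distr \<nu> (borel_of Q2) \<phi>) \<phi> \<psi> (borel_of Q2)"
proof -
  note b = qm_basic[OF grp1 sg1 ts1 qm]
  show ?thesis
  proof
    show "\<phi> \<in> \<nu> \<rightarrow>\<^sub>M borel_of Q2"
      using continuous_map_measurable[OF cont1] measurable_cong_sets[OF b(1) refl] by blast
    show "\<psi> \<in> borel_of Q2 \<rightarrow>\<^sub>M \<nu>"
      using continuous_map_measurable[OF cont2] measurable_cong_sets[OF refl b(1)] by blast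
    show "\<And>x. x \<in> space \<nu> \<Longrightarrow> \<psi> (\<phi> x) = x" using b(2) bij1 by simp
    show "\<And>y. y \<in> space (borel_of Q2) \<Longrightarrow> \<phi> (\<psi> y) = y" using tsQ2 bij2 by simp
  qed simp
qed

lemma qm_transfer:
  assumes qm: "quot_measure G T H \<nu>"
  shows "quot_measure G2 T2 H2 (distr \<nu> (borel_of Q2) \<phi>)"
proof -
  interpret m: mbij \<nu> "distr \<nu> (borel_of Q2) \<phi>" \<phi> \<psi> "borel_of Q2" by (rule mbij_inst[OF qm])
  note b = qm_basic[OF grp1 sg1 ts1 qm]
  let ?\<nu>2 = "distr \<nu> (borel_of Q2) \<phi>"
  have sp2: "space (borel_of Q2) = X2" using tsQ2 by simp
  have em: "emeasure ?\<nu>2 B = emeasure \<nu> (\<psi> ` B)" if "B \<subseteq> X2" for B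
    using m.emeasure_eq[of B] that sp2 by simp
  have psiX2: "\<psi> ` X2 = X1"
  proof
    show "\<psi> ` X2 \<subseteq> X1" using bij2 by blast
    show "X1 \<subseteq> \<psi> ` X2" using bij1 by (metis image_eqI subsetI)
  qed
  show ?thesis
  proof (cases "quot_discrete G T H")
    case True
    then have d2: "quot_discrete G2 T2 H2" using quot_discrete_iff by simp
    have nu: "\<nu> = count_space X1" using qm True unfolding quot_measure_def by simp
    have s2: "sets (borel_of Q2) = Pow X2"
      using sets_borel_of_discrete[of Q2] qm_discrete_open[OF grp2 sg2 ts2 d2] tsQ2 by simp
    have "?\<nu>2 = count_space X2"
    proof (rule measure_eqI)
      show "sets ?\<nu>2 = sets (count_space X2)" using s2 by simp
      fix A assume "A \<in> sets ?\<nu>2"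
      then have A: "A \<subseteq> X2" using s2 by simp
      have inj: "inj_on \<psi> A" using A bij2 by (metis inj_onI subsetD)
      have "\<psi> ` A \<subseteq> X1" using A bij2 by blast
      then have "emeasure ?\<nu>2 A = emeasure (count_space X1) (\<psi> ` A)" using em[OF A] nu by simp
      also have "\<dots> = emeasure (count_space X2) A"
        using emeasure_count_space[OF \<open>\<psi> ` A \<subseteq> X1\<close>] emeasure_count_space[OF A]
          finite_image_iff[OF inj] card_image[OF inj] by simp
      finally show "emeasure ?\<nu>2 A = emeasure (count_space X2) A" .
    qed
    then show ?thesis using d2 unfolding quot_measure_def by simp
  next
    case False
    then have nd2: "\<not> quot_discrete G2 T2 H2" using quot_discrete_iff by simp
    have r: "radon_measure Q1 \<nu>" "emeasure \<nu> (space \<nu>) \<noteq> 0"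
      "\<forall>g\<in>carrier G. \<forall>A\<in>sets \<nu>. emeasure \<nu> ((\<lambda>C. C #>\<^bsub>G\<^esub> g) ` A) = emeasure \<nu> A"
      using qm False unfolding quot_measure_def by auto
    have rad: "radon_measure Q2 ?\<nu>2" unfolding radon_measure_def
    proof (intro conjI allI impI ballI)
      show "sets ?\<nu>2 = sets (borel_of Q2)" by simp
    next
      fix K assume K: "compactin Q2 K"
      then have K2: "K \<subseteq> X2" using compactin_subset_topspace tsQ2 by blast
      have "compactin Q1 (\<psi> ` K)" using image_compactin[OF K cont2] .
      then show "emeasure ?\<nu>2 K < \<infinity>" using b(3) em[OF K2] by simp
    next
      fix A assume "A \<in> sets ?\<nu>2"
      then have A: "A \<in> sets (borel_of Q2)" "A \<subseteq> X2" using sets.sets_into_space[of A "borel_of Q2"] sp2 by auto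
      have psiA: "\<psi> ` A \<in> sets \<nu>" using m.sets_image[OF A(1)] .
      have eqset: "{U. openin Q1 U \<and> \<psi> ` A \<subseteq> U} = (\<lambda>U2. \<psi> ` U2) ` {U2. openin Q2 U2 \<and> A \<subseteq> U2}"
      proof (rule Set.set_eqI, rule iffI)
        fix U assume "U \<in> {U. openin Q1 U \<and> \<psi> ` A \<subseteq> U}"
        then have U: "openin Q1 U" "\<psi> ` A \<subseteq> U" by auto
        have Uc: "U \<subseteq> X1" using openin_subset[OF U(1)] tsQ1 by simp
        have "openin Q2 (\<phi> ` U)" using homeomorphic_map_openness[OF homeo] Uc tsQ1 U(1) by simp
        moreover have "A \<subseteq> \<phi> ` U"
        proof
          fix a assume a: "a \<in> A"
          then have "\<psi> a \<in> U" using U(2) by blast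
          moreover have "a = \<phi> (\<psi> a)" using bij2(2) A(2) a by blast
          ultimately show "a \<in> \<phi> ` U" by (metis image_eqI)
        qed
        moreover have "\<psi> ` (\<phi> ` U) = U" using Uc bij1 by (simp add: image_image subset_eq)
        ultimately show "U \<in> (\<lambda>U2. \<psi> ` U2) ` {U2. openin Q2 U2 \<and> A \<subseteq> U2}"
          by (metis (mono_tags, lifting) image_eqI mem_Collect_eq)
      next
        fix U assume "U \<in> (\<lambda>U2. \<psi> ` U2) ` {U2. openin Q2 U2 \<and> A \<subseteq> U2}"
        then obtain U2 where U2: "openin Q2 U2" "A \<subseteq> U2" "U = \<psi> ` U2" by blast
        have "U2 \<subseteq> X2" using openin_subset[OF U2(1)] tsQ2 by simp
        then have "openin Q1 U" using homeomorphic_map_openness[OF homeo2] tsQ2 U2 by simp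
        then show "U \<in> {U. openin Q1 U \<and> \<psi> ` A \<subseteq> U}" using U2 by blast
      qed
      have "emeasure ?\<nu>2 A = emeasure \<nu> (\<psi> ` A)" using em[OF A(2)] .
      also have "\<dots> = (INF U \<in> {U. openin Q1 U \<and> \<psi> ` A \<subseteq> U}. emeasure \<nu> U)"
        using r(1) psiA unfolding radon_measure_def by blast
      also have "\<dots> = (INF U2 \<in> {U2. openin Q2 U2 \<and> A \<subseteq> U2}. emeasure \<nu> (\<psi> ` U2))"
        unfolding eqset by (simp add: image_comp)
      also have "\<dots> = (INF U2 \<in> {U2. openin Q2 U2 \<and> A \<subseteq> U2}. emeasure ?\<nu>2 U2)"
      proof (intro INF_cong refl)
        fix U2 assume "U2 \<in> {U2. openin Q2 U2 \<and> A \<subseteq> U2}"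
        then have "U2 \<subseteq> X2" using openin_subset[of Q2 U2] tsQ2 by simp
        then show "emeasure \<nu> (\<psi> ` U2) = emeasure ?\<nu>2 U2" using em by simp
      qed
      finally show "emeasure ?\<nu>2 A = (INF U2 \<in> {U2. openin Q2 U2 \<and> A \<subseteq> U2}. emeasure ?\<nu>2 U2)" .
    next
      fix U assume U: "openin Q2 U"
      have Uc: "U \<subseteq> X2" using openin_subset[OF U] tsQ2 by simp
      have psiU: "openin Q1 (\<psi> ` U)" using homeomorphic_map_openness[OF homeo2] tsQ2 Uc U by simp
      have eqset: "{K. compactin Q1 K \<and> K \<subseteq> \<psi> ` U} = (\<lambda>K2. \<psi> ` K2) ` {K2. compactin Q2 K2 \<and> K2 \<subseteq> U}"
      proof (rule Set.set_eqI, rule iffI)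
        fix K assume "K \<in> {K. compactin Q1 K \<and> K \<subseteq> \<psi> ` U}"
        then have K: "compactin Q1 K" "K \<subseteq> \<psi> ` U" by auto
        have Kc: "K \<subseteq> X1" using compactin_subset_topspace[OF K(1)] tsQ1 by simp
        have "compactin Q2 (\<phi> ` K)" using image_compactin[OF K(1) cont1] .
        moreover have "\<phi> ` K \<subseteq> U"
        proof
          fix z assume "z \<in> \<phi> ` K"
          then obtain k where k: "k \<in> K" "z = \<phi> k" by blast
          then obtain u where "u \<in> U" "k = \<psi> u" using K(2) by blast
          then show "z \<in> U" using k bij2(2) Uc by auto
        qed
        moreover have "\<psi> ` (\<phi> ` K) = K" using Kc bij1 by (simp add: image_image subset_eq)
        ultimately show "K \<in> (\<lambda>K2. \<psi> ` K2) ` {K2. compactin Q2 K2 \<and> K2 \<subseteq> U}"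
          by (metis (mono_tags, lifting) image_eqI mem_Collect_eq)
      next
        fix K assume "K \<in> (\<lambda>K2. \<psi> ` K2) ` {K2. compactin Q2 K2 \<and> K2 \<subseteq> U}"
        then obtain K2 where K2: "compactin Q2 K2" "K2 \<subseteq> U" "K = \<psi> ` K2" by blast
        then show "K \<in> {K. compactin Q1 K \<and> K \<subseteq> \<psi> ` U}" using image_compactin[OF K2(1) cont2] by blast
      qed
      have "emeasure ?\<nu>2 U = emeasure \<nu> (\<psi> ` U)" using em[OF Uc] .
      also have "\<dots> = (SUP K \<in> {K. compactin Q1 K \<and> K \<subseteq> \<psi> ` U}. emeasure \<nu> K)"
        using r(1) psiU unfolding radon_measure_def by blast
      also have "\<dots> = (SUP K2 \<in> {K2. compactin Q2 K2 \<and> K2 \<subseteq> U}. emeasure \<nu> (\<psi> ` K2))"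
        unfolding eqset by (simp add: image_comp)
      also have "\<dots> = (SUP K2 \<in> {K2. compactin Q2 K2 \<and> K2 \<subseteq> U}. emeasure ?\<nu>2 K2)"
      proof (intro SUP_cong refl)
        fix K2 assume "K2 \<in> {K2. compactin Q2 K2 \<and> K2 \<subseteq> U}"
        then have "K2 \<subseteq> X2" using compactin_subset_topspace[of Q2 K2] tsQ2 by simp
        then show "emeasure \<nu> (\<psi> ` K2) = emeasure ?\<nu>2 K2" using em by simp
      qed
      finally show "emeasure ?\<nu>2 U = (SUP K2 \<in> {K2. compactin Q2 K2 \<and> K2 \<subseteq> U}. emeasure ?\<nu>2 K2)" .
    qed
    have nz: "emeasure ?\<nu>2 (space ?\<nu>2) \<noteq> 0"
      using em[of X2] sp2 psiX2 r(2) b(2) by simp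
    have inv: "\<forall>g\<in>carrier G2. \<forall>A\<in>sets ?\<nu>2. emeasure ?\<nu>2 ((\<lambda>C. C #>\<^bsub>G2\<^esub> g) ` A) = emeasure ?\<nu>2 A"
    proof (intro ballI)
      fix g2 A assume g2: "g2 \<in> carrier G2" and "A \<in> sets ?\<nu>2"
      then have A: "A \<in> sets (borel_of Q2)" "A \<subseteq> X2" using sets.sets_into_space[of A "borel_of Q2"] sp2 by auto
      obtain g where g: "g \<in> carrier G" "\<forall>C\<in>X1. \<phi> (C #>\<^bsub>G\<^esub> g) = \<phi> C #>\<^bsub>G2\<^esub> g2"
        using surj[OF g2] by blast
      have A2: "(\<lambda>C. C #>\<^bsub>G2\<^esub> g2) ` A \<subseteq> X2" using A(2) rcosets_mult[OF grp2 sg2 _ g2] by blast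
      have "\<psi> ` ((\<lambda>C. C #>\<^bsub>G2\<^esub> g2) ` A) = (\<lambda>C. C #>\<^bsub>G\<^esub> g) ` (\<psi> ` A)"
        using psi_action[OF _ g2 g(1) g(2)] A(2) by (force simp: image_image)
      then have "emeasure ?\<nu>2 ((\<lambda>C. C #>\<^bsub>G2\<^esub> g2) ` A) = emeasure \<nu> ((\<lambda>C. C #>\<^bsub>G\<^esub> g) ` (\<psi> ` A))"
        using em[OF A2] by simp
      also have "\<dots> = emeasure \<nu> (\<psi> ` A)" using r(3) g(1) m.sets_image[OF A(1)] by blast
      also have "\<dots> = emeasure ?\<nu>2 A" using em[OF A(2)] by simp
      finally show "emeasure ?\<nu>2 ((\<lambda>C. C #>\<^bsub>G2\<^esub> g2) ` A) = emeasure ?\<nu>2 A" .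
    qed
    show ?thesis using nd2 rad nz inv unfolding quot_measure_def by simp
  qed
qed

end

lemma L2set_cong:
  assumes "\<And>x. x \<in> space M \<Longrightarrow> f x = g x"
  shows "f \<in> L2set M \<longleftrightarrow> g \<in> L2set M" "l2norm M f = l2norm M g"
proof -
  have "f \<in> borel_measurable M \<longleftrightarrow> g \<in> borel_measurable M" using measurable_cong[of M f g] assms by blast
  moreover have "integrable M (\<lambda>D. (cmod (f D))\<^sup>2) \<longleftrightarrow> integrable M (\<lambda>D. (cmod (g D))\<^sup>2)"
    using assms by (intro Bochner_Integration.integrable_cong) auto
  ultimately show "f \<in> L2set M \<longleftrightarrow> g \<in> L2set M" unfolding L2set_def by blast
  have "(LINT D|M. (cmod (f D))\<^sup>2) = (LINT D|M. (cmod (g D))\<^sup>2)"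
    using assms by (intro Bochner_Integration.integral_cong) auto
  then show "l2norm M f = l2norm M g" unfolding l2norm_def by simp
qed

lemma hconv_cong:
  assumes "\<And>x. x \<in> space M \<Longrightarrow> \<xi> x = \<xi>' x"
  shows "hconv G H M f \<xi> = hconv G H M f \<xi>'"
  unfolding hconv_def using assms by (intro ext Bochner_Integration.integral_cong) auto

context mbij
begin

lemma L2set_iff: "\<xi> \<in> L2set N \<longleftrightarrow> (\<lambda>x. \<xi> (\<phi> x)) \<in> L2set M"
  unfolding L2set_def using meas_iff[of \<xi>] integrable_iff[of "\<lambda>D. (cmod (\<xi> D))\<^sup>2"] by simp

lemma l2norm_eq: "l2norm N \<xi> = l2norm M (\<lambda>x. \<xi> (\<phi> x))"
  unfolding l2norm_def using integral_eq[of "\<lambda>D. (cmod (\<xi> D))\<^sup>2"] by simp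

end

context hiso_loc
begin

lemma hecke1:
  assumes f2: "f2 \<in> hecke_alg G2 T2 H2"
  shows "(\<lambda>C. f2 (\<phi> C)) \<in> hecke_alg G T H"
proof -
  have c: "continuous_map Q2 euclidean f2" and inv: "\<forall>C\<in>X2. \<forall>h\<in>H2. f2 (C #>\<^bsub>G2\<^esub> h) = f2 C"
    using f2 unfolding hecke_alg_def by auto
  obtain K2 where K2: "compactin Q2 K2" "\<forall>C\<in>X2 - K2. f2 C = 0" using f2 unfolding hecke_alg_def by blast
  have "continuous_map Q1 euclidean (f2 \<circ> \<phi>)" using continuous_map_compose[OF cont1 c] .
  then have "continuous_map Q1 euclidean (\<lambda>C. f2 (\<phi> C))" by (simp add: o_def)
  moreover have "compactin Q1 (\<psi> ` K2)" using image_compactin[OF K2(1) cont2] .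
  moreover have "\<forall>C\<in>X1 - \<psi> ` K2. f2 (\<phi> C) = 0"
  proof
    fix C assume C: "C \<in> X1 - \<psi> ` K2"
    then have "\<phi> C \<notin> K2" using bij1(2) by (metis DiffD1 DiffD2 image_eqI)
    then show "f2 (\<phi> C) = 0" using K2(2) bij1(1) C by blast
  qed
  moreover have "\<forall>C\<in>X1. \<forall>h\<in>H. f2 (\<phi> (C #>\<^bsub>G\<^esub> h)) = f2 (\<phi> C)"
  proof (intro ballI)
    fix C h assume C: "C \<in> X1" and h: "h \<in> H"
    have hc: "h \<in> carrier G" using subgroup.mem_carrier[OF sg1 h] .
    show "f2 (\<phi> (C #>\<^bsub>G\<^esub> h)) = f2 (\<phi> C)" using compat(1)[OF C hc] inv bij1(1)[OF C] piH[OF h] by simp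
  qed
  ultimately show ?thesis unfolding hecke_alg_def by blast
qed

lemma hecke2:
  assumes f: "f \<in> hecke_alg G T H"
  shows "(\<lambda>C. f (\<psi> C)) \<in> hecke_alg G2 T2 H2"
proof -
  have c: "continuous_map Q1 euclidean f" and inv: "\<forall>C\<in>X1. \<forall>h\<in>H. f (C #>\<^bsub>G\<^esub> h) = f C"
    using f unfolding hecke_alg_def by auto
  obtain K where K: "compactin Q1 K" "\<forall>C\<in>X1 - K. f C = 0" using f unfolding hecke_alg_def by blast
  have "continuous_map Q2 euclidean (f \<circ> \<psi>)" using continuous_map_compose[OF cont2 c] .
  then have "continuous_map Q2 euclidean (\<lambda>C. f (\<psi> C))" by (simp add: o_def)
  moreover have "compactin Q2 (\<phi> ` K)" using image_compactin[OF K(1) cont1] .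
  moreover have "\<forall>C\<in>X2 - \<phi> ` K. f (\<psi> C) = 0"
  proof
    fix C assume C: "C \<in> X2 - \<phi> ` K"
    then have "\<psi> C \<notin> K" using bij2(2) by (metis DiffD1 DiffD2 image_eqI)
    then show "f (\<psi> C) = 0" using K(2) bij2(1) C by blast
  qed
  moreover have "\<forall>C\<in>X2. \<forall>h\<in>H2. f (\<psi> (C #>\<^bsub>G2\<^esub> h)) = f (\<psi> C)"
  proof (intro ballI)
    fix C h2 assume C: "C \<in> X2" and h2: "h2 \<in> H2"
    have hc: "h2 \<in> carrier G2" using subgroup.mem_carrier[OF sg2 h2] .
    obtain g where g: "g \<in> carrier G" "g \<in> H" "\<forall>C\<in>X1. \<phi> (C #>\<^bsub>G\<^esub> g) = \<phi> C #>\<^bsub>G2\<^esub> h2"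
      using surj[OF hc] h2 by blast
    show "f (\<psi> (C #>\<^bsub>G2\<^esub> h2)) = f (\<psi> C)" using psi_action[OF C hc g(1) g(3)] inv bij2(1)[OF C] g(2) by simp
  qed
  ultimately show ?thesis unfolding hecke_alg_def by blast
qed

lemma hconv_transfer:
  assumes qm: "quot_measure G T H \<nu>" and f2inv: "\<forall>C\<in>X2. \<forall>h\<in>H2. f2 (C #>\<^bsub>G2\<^esub> h) = f2 C"
    and C: "C \<in> X1"
  shows "hconv G2 H2 (distr \<nu> (borel_of Q2) \<phi>) f2 \<xi>2 (\<phi> C) = hconv G H \<nu> (\<lambda>C. f2 (\<phi> C)) (\<lambda>D. \<xi>2 (\<phi> D)) C"
proof -
  interpret m: mbij \<nu> "distr \<nu> (borel_of Q2) \<phi>" \<phi> \<psi> "borel_of Q2" by (rule mbij_inst[OF qm])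
  note b = qm_basic[OF grp1 sg1 ts1 qm]
  have "hconv G2 H2 (distr \<nu> (borel_of Q2) \<phi>) f2 \<xi>2 (\<phi> C) =
      (LINT D|\<nu>. f2 (\<phi> C #>\<^bsub>G2\<^esub> inv\<^bsub>G2\<^esub> (coset_rep G2 H2 (\<phi> D))) * \<xi>2 (\<phi> D))"
    unfolding hconv_def by (rule m.integral_eq)
  also have "\<dots> = (LINT D|\<nu>. f2 (\<phi> (C #>\<^bsub>G\<^esub> inv\<^bsub>G\<^esub> (coset_rep G H D))) * \<xi>2 (\<phi> D))"
  proof (rule Bochner_Integration.integral_cong[OF refl])
    fix D assume "D \<in> space \<nu>"
    then have D: "D \<in> X1" using b(2) by simp
    let ?r = "coset_rep G H D"
    have r: "?r \<in> carrier G" "D = H #>\<^bsub>G\<^esub> ?r" using coset_rep[OF grp1 sg1 D] by auto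
    let ?p = "\<pi> ?r"
    have p: "?p \<in> carrier G2" using pi_carrier[OF r(1)] .
    have HX: "H \<in> X1" using subgroup.subgroup_in_rcosets[OF sg1 grp1] .
    have "\<phi> D = H2 #>\<^bsub>G2\<^esub> ?p" using compat(1)[OF HX r(1)] r(2) phiH by simp
    then obtain h where h: "h \<in> H2" "coset_rep G2 H2 (\<phi> D) = h \<otimes>\<^bsub>G2\<^esub> ?p"
      using coset_rep_coset[OF grp2 sg2 p] by metis
    have hc: "h \<in> carrier G2" "inv\<^bsub>G2\<^esub> h \<in> H2"
      using subgroup.mem_carrier[OF sg2 h(1)] subgroup.m_inv_closed[OF sg2 h(1)] by auto
    have phiC: "\<phi> C \<in> X2" using bij1(1)[OF C] .
    have phiCc: "\<phi> C \<subseteq> carrier G2" using rcosets_subset[OF grp2 sg2 phiC] .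
    have ip: "inv\<^bsub>G2\<^esub> ?p \<in> carrier G2" using group.inv_closed[OF grp2 p] .
    have ih: "inv\<^bsub>G2\<^esub> h \<in> carrier G2" using group.inv_closed[OF grp2 hc(1)] .
    have "\<phi> C #>\<^bsub>G2\<^esub> inv\<^bsub>G2\<^esub> (coset_rep G2 H2 (\<phi> D)) = (\<phi> C #>\<^bsub>G2\<^esub> inv\<^bsub>G2\<^esub> ?p) #>\<^bsub>G2\<^esub> inv\<^bsub>G2\<^esub> h"
      using h(2) group.inv_mult_group[OF grp2 hc(1) p] group.coset_mult_assoc[OF grp2 phiCc ip ih] by simp
    then have "f2 (\<phi> C #>\<^bsub>G2\<^esub> inv\<^bsub>G2\<^esub> (coset_rep G2 H2 (\<phi> D))) = f2 (\<phi> C #>\<^bsub>G2\<^esub> inv\<^bsub>G2\<^esub> ?p)"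
      using f2inv rcosets_mult[OF grp2 sg2 phiC ip] hc(2) by simp
    also have "\<dots> = f2 (\<phi> (C #>\<^bsub>G\<^esub> inv\<^bsub>G\<^esub> ?r))" using compat(2)[OF C r(1)] by simp
    finally show "f2 (\<phi> C #>\<^bsub>G2\<^esub> inv\<^bsub>G2\<^esub> (coset_rep G2 H2 (\<phi> D))) * \<xi>2 (\<phi> D) =
        f2 (\<phi> (C #>\<^bsub>G\<^esub> inv\<^bsub>G\<^esub> ?r)) * \<xi>2 (\<phi> D)" by simp
  qed
  also have "\<dots> = hconv G H \<nu> (\<lambda>C. f2 (\<phi> C)) (\<lambda>D. \<xi>2 (\<phi> D)) C" unfolding hconv_def by simp
  finally show ?thesis .
qed

lemma lnorm_transfer:
  assumes qm: "quot_measure G T H \<nu>" and f2inv: "\<forall>C\<in>X2. \<forall>h\<in>H2. f2 (C #>\<^bsub>G2\<^esub> h) = f2 C"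
  shows "lambda_norm G2 H2 (distr \<nu> (borel_of Q2) \<phi>) f2 = lambda_norm G H \<nu> (\<lambda>C. f2 (\<phi> C))"
proof -
  interpret m: mbij \<nu> "distr \<nu> (borel_of Q2) \<phi>" \<phi> \<psi> "borel_of Q2" by (rule mbij_inst[OF qm])
  note b = qm_basic[OF grp1 sg1 ts1 qm]
  let ?\<nu>2 = "distr \<nu> (borel_of Q2) \<phi>"
  let ?f = "\<lambda>C. f2 (\<phi> C)"
  have key: "l2norm ?\<nu>2 (hconv G2 H2 ?\<nu>2 f2 \<xi>2) = l2norm \<nu> (hconv G H \<nu> ?f (\<lambda>D. \<xi>2 (\<phi> D)))" for \<xi>2
  proof -
    have "l2norm ?\<nu>2 (hconv G2 H2 ?\<nu>2 f2 \<xi>2) = l2norm \<nu> (\<lambda>C. hconv G2 H2 ?\<nu>2 f2 \<xi>2 (\<phi> C))"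
      by (rule m.l2norm_eq)
    also have "\<dots> = l2norm \<nu> (hconv G H \<nu> ?f (\<lambda>D. \<xi>2 (\<phi> D)))"
      using hconv_transfer[OF qm f2inv] b(2) by (intro L2set_cong(2)) simp
    finally show ?thesis .
  qed
  have "{M. 0 \<le> M \<and> (\<forall>\<xi>\<in>L2set ?\<nu>2. l2norm ?\<nu>2 (hconv G2 H2 ?\<nu>2 f2 \<xi>) \<le> M * l2norm ?\<nu>2 \<xi>)} =
        {M. 0 \<le> M \<and> (\<forall>\<xi>\<in>L2set \<nu>. l2norm \<nu> (hconv G H \<nu> ?f \<xi>) \<le> M * l2norm \<nu> \<xi>)}"
  proof (rule Set.set_eqI, rule iffI)
    fix M assume "M \<in> {M. 0 \<le> M \<and> (\<forall>\<xi>\<in>L2set ?\<nu>2. l2norm ?\<nu>2 (hconv G2 H2 ?\<nu>2 f2 \<xi>) \<le> M * l2norm ?\<nu>2 \<xi>)}"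
    then have M: "0 \<le> M" "\<forall>\<xi>\<in>L2set ?\<nu>2. l2norm ?\<nu>2 (hconv G2 H2 ?\<nu>2 f2 \<xi>) \<le> M * l2norm ?\<nu>2 \<xi>" by auto
    have "\<forall>\<xi>\<in>L2set \<nu>. l2norm \<nu> (hconv G H \<nu> ?f \<xi>) \<le> M * l2norm \<nu> \<xi>"
    proof
      fix \<xi> assume \<xi>: "\<xi> \<in> L2set \<nu>"
      let ?\<xi>2 = "\<lambda>C. \<xi> (\<psi> C)"
      have eq: "\<And>x. x \<in> space \<nu> \<Longrightarrow> ?\<xi>2 (\<phi> x) = \<xi> x" using b(2) bij1 by simp
      have "(\<lambda>x. ?\<xi>2 (\<phi> x)) \<in> L2set \<nu> \<longleftrightarrow> \<xi> \<in> L2set \<nu>"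
        by (rule L2set_cong(1)[of \<nu> "\<lambda>x. ?\<xi>2 (\<phi> x)" \<xi>]) (rule eq)
      then have "(\<lambda>x. ?\<xi>2 (\<phi> x)) \<in> L2set \<nu>" using \<xi> by simp
      then have \<xi>2: "?\<xi>2 \<in> L2set ?\<nu>2" using m.L2set_iff by simp
      have n1: "l2norm \<nu> (\<lambda>x. ?\<xi>2 (\<phi> x)) = l2norm \<nu> \<xi>"
        by (rule L2set_cong(2)[of \<nu> "\<lambda>x. ?\<xi>2 (\<phi> x)" \<xi>]) (rule eq)
      have n2: "l2norm ?\<nu>2 ?\<xi>2 = l2norm \<nu> \<xi>" using m.l2norm_eq n1 by simp
      have "l2norm \<nu> (hconv G H \<nu> ?f \<xi>) = l2norm \<nu> (hconv G H \<nu> ?f (\<lambda>x. ?\<xi>2 (\<phi> x)))"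
        using hconv_cong[of \<nu> "\<lambda>x. ?\<xi>2 (\<phi> x)" \<xi> G H ?f] eq by simp
      also have "\<dots> = l2norm ?\<nu>2 (hconv G2 H2 ?\<nu>2 f2 ?\<xi>2)" using key by simp
      also have "\<dots> \<le> M * l2norm ?\<nu>2 ?\<xi>2" using M(2) \<xi>2 by blast
      also have "\<dots> = M * l2norm \<nu> \<xi>" using n2 by simp
      finally show "l2norm \<nu> (hconv G H \<nu> ?f \<xi>) \<le> M * l2norm \<nu> \<xi>" .
    qed
    then show "M \<in> {M. 0 \<le> M \<and> (\<forall>\<xi>\<in>L2set \<nu>. l2norm \<nu> (hconv G H \<nu> ?f \<xi>) \<le> M * l2norm \<nu> \<xi>)}"
      using M(1) by simp
  next
    fix M assume "M \<in> {M. 0 \<le> M \<and> (\<forall>\<xi>\<in>L2set \<nu>. l2norm \<nu> (hconv G H \<nu> ?f \<xi>) \<le> M * l2norm \<nu> \<xi>)}"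
    then have M: "0 \<le> M" "\<forall>\<xi>\<in>L2set \<nu>. l2norm \<nu> (hconv G H \<nu> ?f \<xi>) \<le> M * l2norm \<nu> \<xi>" by auto
    have "\<forall>\<xi>\<in>L2set ?\<nu>2. l2norm ?\<nu>2 (hconv G2 H2 ?\<nu>2 f2 \<xi>) \<le> M * l2norm ?\<nu>2 \<xi>"
    proof
      fix \<xi>2 assume "\<xi>2 \<in> L2set ?\<nu>2"
      then have \<xi>: "(\<lambda>x. \<xi>2 (\<phi> x)) \<in> L2set \<nu>" using m.L2set_iff by simp
      have "l2norm ?\<nu>2 (hconv G2 H2 ?\<nu>2 f2 \<xi>2) = l2norm \<nu> (hconv G H \<nu> ?f (\<lambda>x. \<xi>2 (\<phi> x)))" using key .
      also have "\<dots> \<le> M * l2norm \<nu> (\<lambda>x. \<xi>2 (\<phi> x))" using M(2) \<xi> by blast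
      also have "l2norm \<nu> (\<lambda>x. \<xi>2 (\<phi> x)) = l2norm ?\<nu>2 \<xi>2" using m.l2norm_eq by simp
      finally show "l2norm ?\<nu>2 (hconv G2 H2 ?\<nu>2 f2 \<xi>2) \<le> M * l2norm ?\<nu>2 \<xi>2" .
    qed
    then show "M \<in> {M. 0 \<le> M \<and> (\<forall>\<xi>\<in>L2set ?\<nu>2. l2norm ?\<nu>2 (hconv G2 H2 ?\<nu>2 f2 \<xi>) \<le> M * l2norm ?\<nu>2 \<xi>)}"
      using M(1) by simp
  qed
  then show ?thesis unfolding lambda_norm_def by simp
qed

end

locale qsetting =
  fixes G (structure) and T H N
  assumes lcg: "lc_group G T" and sg: "subgroup H G" and nN: "N \<lhd> G" and NH: "N \<subseteq> H"
begin

abbreviation "G' \<equiv> G Mod N"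
abbreviation "TN \<equiv> quot_top G T N"
abbreviation "H' \<equiv> quot_sub G N H"
definition phi :: "'a set \<Rightarrow> 'a set set" where "phi C = (\<lambda>y. N #> y) ` C"
definition psi :: "'a set set \<Rightarrow> 'a set" where "psi C = \<Union>C"

lemma grp: "group G" using lcg_basic[OF lcg] by simp
lemma ts: "topspace T = carrier G" using lcg_basic[OF lcg] by simp
lemma sgN: "subgroup N G" using nN normal_imp_subgroup by blast
lemma grp': "group G'" using normal.factorgroup_is_group[OF nN] .
lemma carrier': "carrier G' = rcosets N" by (simp add: FactGroup_def)
lemma tsTN: "topspace TN = carrier G'" using topspace_quot_top[OF grp sgN ts] carrier' by simp

lemma mult': "A \<in> carrier G' \<Longrightarrow> B \<in> carrier G' \<Longrightarrow> A \<otimes>\<^bsub>G'\<^esub> B = A <#> B" by simp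

lemma rsum: "x \<in> carrier G \<Longrightarrow> y \<in> carrier G \<Longrightarrow> (N #> x) \<otimes>\<^bsub>G'\<^esub> (N #> y) = N #> (x \<otimes> y)"
  using normal.rcos_sum[OF nN] by simp

lemma inv': "x \<in> carrier G \<Longrightarrow> inv\<^bsub>G'\<^esub> (N #> x) = N #> inv x"
proof -
  assume x: "x \<in> carrier G"
  have "N #> x \<in> carrier G'" using carrier' group.rcosetsI[OF grp subgroup.subset[OF sgN] x] by simp
  then show ?thesis using normal.inv_FactGroup[OF nN] normal.rcos_inv[OF nN x] by simp
qed

lemma pi_carrier': "x \<in> carrier G \<Longrightarrow> N #> x \<in> carrier G'"
  using carrier' group.rcosetsI[OF grp subgroup.subset[OF sgN]] by simp

lemma rcoset': "A \<subseteq> carrier G' \<Longrightarrow> A #>\<^bsub>G'\<^esub> Y = (\<lambda>a. a \<otimes>\<^bsub>G'\<^esub> Y) ` A"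
  unfolding r_coset_def by auto

lemma phi_act:
  assumes C: "C \<subseteq> carrier G" and g: "g \<in> carrier G"
  shows "phi (C #> g) = phi C #>\<^bsub>G'\<^esub> (N #> g)"
proof -
  have "phi C \<subseteq> carrier G'" unfolding phi_def using C pi_carrier' by blast
  then have "phi C #>\<^bsub>G'\<^esub> (N #> g) = (\<lambda>a. a \<otimes>\<^bsub>G'\<^esub> (N #> g)) ` ((\<lambda>y. N #> y) ` C)"
    using rcoset' unfolding phi_def by blast
  also have "\<dots> = (\<lambda>y. (N #> y) \<otimes>\<^bsub>G'\<^esub> (N #> g)) ` C" by (simp add: image_image)
  also have "\<dots> = (\<lambda>y. N #> (y \<otimes> g)) ` C"
    using rsum C g by (intro image_cong refl) auto
  also have "\<dots> = phi (C #> g)" unfolding phi_def r_coset_def by auto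
  finally show ?thesis by simp
qed

lemma phiH: "phi H = H'" unfolding phi_def quot_sub_def by simp

lemma subgroupH': "subgroup H' G'"
proof (rule group.subgroupI[OF grp'])
  have Hc: "H \<subseteq> carrier G" using subgroup.subset[OF sg] .
  show "H' \<subseteq> carrier G'" unfolding quot_sub_def using Hc pi_carrier' by blast
  show "H' \<noteq> {}" unfolding quot_sub_def using subgroup.one_closed[OF sg] by blast
  fix a b assume a: "a \<in> H'" and b: "b \<in> H'"
  obtain h where h: "h \<in> H" "a = N #> h" using a unfolding quot_sub_def by blast
  obtain k where k: "k \<in> H" "b = N #> k" using b unfolding quot_sub_def by blast
  show "inv\<^bsub>G'\<^esub> a \<in> H'" using inv'[of h] h Hc subgroup.m_inv_closed[OF sg h(1)] unfolding quot_sub_def by auto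
  show "a \<otimes>\<^bsub>G'\<^esub> b \<in> H'" using rsum[of h k] h k Hc subgroup.m_closed[OF sg h(1) k(1)]
    unfolding quot_sub_def by auto
qed

lemma psi_phi: "C \<in> rcosets H \<Longrightarrow> psi (phi C) = C"
proof -
  assume C: "C \<in> rcosets H"
  show ?thesis unfolding psi_def phi_def
  proof (rule Set.set_eqI, rule iffI)
    fix z assume "z \<in> \<Union>((\<lambda>y. N #> y) ` C)"
    then obtain y where y: "y \<in> C" "z \<in> N #> y" by blast
    then obtain n where "n \<in> N" "z = n \<otimes> y" unfolding r_coset_def by blast
    moreover have "C = H #> y" using rcos_mem_eq[OF grp sg C y(1)] .
    ultimately show "z \<in> C" using NH unfolding r_coset_def by blast
  next
    fix z assume z: "z \<in> C"
    then have "z \<in> carrier G" using rcosets_subset[OF grp sg C] by blast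
    then have "z \<in> N #> z" using group.rcos_self[OF grp _ sgN] by blast
    then show "z \<in> \<Union>((\<lambda>y. N #> y) ` C)" using z by blast
  qed
qed

lemma phi_coset: "x \<in> carrier G \<Longrightarrow> phi (H #> x) = H' #>\<^bsub>G'\<^esub> (N #> x)"
  using phi_act[OF subgroup.subset[OF sg]] phiH by simp

lemma X2_char: "rcosets\<^bsub>G'\<^esub> H' = phi ` (rcosets H)"
proof (rule Set.set_eqI, rule iffI)
  fix C2 assume "C2 \<in> rcosets\<^bsub>G'\<^esub> H'"
  then obtain Y where Y: "Y \<in> carrier G'" "C2 = H' #>\<^bsub>G'\<^esub> Y" unfolding RCOSETS_def by blast
  then obtain x where x: "x \<in> carrier G" "Y = N #> x" using carrier' unfolding RCOSETS_def by auto
  then have "C2 = phi (H #> x)" using phi_coset Y by simp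
  moreover have "H #> x \<in> rcosets H" using group.rcosetsI[OF grp subgroup.subset[OF sg] x(1)] .
  ultimately show "C2 \<in> phi ` (rcosets H)" by blast
next
  fix C2 assume "C2 \<in> phi ` (rcosets H)"
  then obtain x where x: "x \<in> carrier G" "C2 = phi (H #> x)" unfolding RCOSETS_def by blast
  then have "C2 = H' #>\<^bsub>G'\<^esub> (N #> x)" using phi_coset by simp
  then show "C2 \<in> rcosets\<^bsub>G'\<^esub> H'" using pi_carrier'[OF x(1)] unfolding RCOSETS_def by blast
qed

lemma bij1: "C \<in> rcosets H \<Longrightarrow> phi C \<in> rcosets\<^bsub>G'\<^esub> H'" "C \<in> rcosets H \<Longrightarrow> psi (phi C) = C"
  using X2_char psi_phi by auto

lemma bij2: "C \<in> rcosets\<^bsub>G'\<^esub> H' \<Longrightarrow> psi C \<in> rcosets H" "C \<in> rcosets\<^bsub>G'\<^esub> H' \<Longrightarrow> phi (psi C) = C"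
  using X2_char psi_phi by auto

lemma openin_Q2:
  "openin (quot_top G' TN H') U \<longleftrightarrow> U \<subseteq> rcosets\<^bsub>G'\<^esub> H' \<and> openin T (\<Union>(psi ` U))"
proof -
  have "openin (quot_top G' TN H') U \<longleftrightarrow> U \<subseteq> rcosets\<^bsub>G'\<^esub> H' \<and> openin TN (\<Union>U)"
    using openin_quot_top[OF grp' subgroupH'] .
  moreover have "U \<subseteq> rcosets\<^bsub>G'\<^esub> H' \<Longrightarrow> \<Union>U \<subseteq> rcosets N"
    using subgroup.rcosets_carrier[OF subgroupH' grp'] carrier' by blast
  moreover have "\<Union>(\<Union>U) = \<Union>(psi ` U)" unfolding psi_def by blast
  ultimately show ?thesis using openin_quot_top[OF grp sgN] by auto
qed

lemma cont1: "continuous_map (quot_top G T H) (quot_top G' TN H') phi"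
  unfolding continuous_map_def
proof (intro conjI allI impI)
  show "phi \<in> topspace (quot_top G T H) \<rightarrow> topspace (quot_top G' TN H')"
    using topspace_quot_top[OF grp sg ts] topspace_quot_top[OF grp' subgroupH' tsTN] bij1 by auto
  fix U assume "openin (quot_top G' TN H') U"
  then have U: "U \<subseteq> rcosets\<^bsub>G'\<^esub> H'" "openin T (\<Union>(psi ` U))" using openin_Q2 by auto
  have "{x \<in> topspace (quot_top G T H). phi x \<in> U} = psi ` U"
  proof (rule Set.set_eqI, rule iffI)
    fix C assume "C \<in> {x \<in> topspace (quot_top G T H). phi x \<in> U}"
    then have "C \<in> rcosets H" "phi C \<in> U" using topspace_quot_top[OF grp sg ts] by auto
    then show "C \<in> psi ` U" using bij1(2) by (metis image_eqI)
  next
    fix C assume "C \<in> psi ` U"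
    then obtain C2 where "C2 \<in> U" "C = psi C2" by blast
    then show "C \<in> {x \<in> topspace (quot_top G T H). phi x \<in> U}"
      using U(1) bij2 topspace_quot_top[OF grp sg ts] by auto
  qed
  moreover have "psi ` U \<subseteq> rcosets H" using U(1) bij2 by blast
  ultimately show "openin (quot_top G T H) {x \<in> topspace (quot_top G T H). phi x \<in> U}"
    using openin_quot_top[OF grp sg] U(2) by simp
qed

lemma cont2: "continuous_map (quot_top G' TN H') (quot_top G T H) psi"
  unfolding continuous_map_def
proof (intro conjI allI impI)
  show "psi \<in> topspace (quot_top G' TN H') \<rightarrow> topspace (quot_top G T H)"
    using topspace_quot_top[OF grp sg ts] topspace_quot_top[OF grp' subgroupH' tsTN] bij2 by auto
  fix U assume "openin (quot_top G T H) U"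
  then have U: "U \<subseteq> rcosets H" "openin T (\<Union>U)" using openin_quot_top[OF grp sg] by auto
  have eq: "{x \<in> topspace (quot_top G' TN H'). psi x \<in> U} = phi ` U"
  proof (rule Set.set_eqI, rule iffI)
    fix C assume "C \<in> {x \<in> topspace (quot_top G' TN H'). psi x \<in> U}"
    then have "C \<in> rcosets\<^bsub>G'\<^esub> H'" "psi C \<in> U" using topspace_quot_top[OF grp' subgroupH' tsTN] by auto
    then show "C \<in> phi ` U" using bij2(2) by (metis image_eqI)
  next
    fix C assume "C \<in> phi ` U"
    then obtain C1 where "C1 \<in> U" "C = phi C1" by blast
    then show "C \<in> {x \<in> topspace (quot_top G' TN H'). psi x \<in> U}"
      using U(1) bij1 topspace_quot_top[OF grp' subgroupH' tsTN] by auto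
  qed
  have "psi ` (phi ` U) = U" using U(1) bij1(2) by (force simp: image_image)
  moreover have "phi ` U \<subseteq> rcosets\<^bsub>G'\<^esub> H'" using U(1) bij1 by blast
  ultimately show "openin (quot_top G' TN H') {x \<in> topspace (quot_top G' TN H'). psi x \<in> U}"
    unfolding eq using openin_Q2 U(2) by simp
qed

lemma rep_N: "Y \<in> carrier G' \<Longrightarrow> coset_rep G N Y \<in> carrier G \<and> Y = N #> coset_rep G N Y"
  using coset_rep[OF grp sgN] carrier' by auto

lemma rep_NH: "Y \<in> H' \<Longrightarrow> coset_rep G N Y \<in> H"
proof -
  assume Y: "Y \<in> H'"
  then obtain h where h: "h \<in> H" "Y = N #> h" unfolding quot_sub_def by blast
  have hc: "h \<in> carrier G" using subgroup.mem_carrier[OF sg h(1)] .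
  then have "Y \<in> rcosets N" using h group.rcosetsI[OF grp subgroup.subset[OF sgN]] by blast
  then have "coset_rep G N Y \<in> Y" using coset_rep(3)[OF grp sgN] by blast
  then obtain n where n: "n \<in> N" "coset_rep G N Y = n \<otimes> h" using h unfolding r_coset_def by blast
  have "n \<in> H" using n(1) NH by blast
  then have "n \<otimes> h \<in> H" using subgroup.m_closed[OF sg _ h(1)] by blast
  then show ?thesis using n(2) by simp
qed

lemma iso1: "hiso_loc G T H G' TN H' phi psi (\<lambda>g. N #> g)"
proof (rule hiso_loc.intro)
  show "group G" by (rule grp)
  show "group G'" by (rule grp')
  show "subgroup H G" by (rule sg)
  show "subgroup H' G'" by (rule subgroupH')
  show "topspace T = carrier G" by (rule ts)
  show "topspace TN = carrier G'" by (rule tsTN)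
  show "\<And>C. C \<in> rcosets H \<Longrightarrow> phi C \<in> rcosets\<^bsub>G'\<^esub> H'" by (rule bij1)
  show "\<And>C. C \<in> rcosets H \<Longrightarrow> psi (phi C) = C" by (rule bij1)
  show "\<And>C. C \<in> rcosets\<^bsub>G'\<^esub> H' \<Longrightarrow> psi C \<in> rcosets H" by (rule bij2)
  show "\<And>C. C \<in> rcosets\<^bsub>G'\<^esub> H' \<Longrightarrow> phi (psi C) = C" by (rule bij2)
  show "continuous_map (quot_top G T H) (quot_top G' TN H') phi" by (rule cont1)
  show "continuous_map (quot_top G' TN H') (quot_top G T H) psi" by (rule cont2)
  show "\<And>g. g \<in> carrier G \<Longrightarrow> N #> g \<in> carrier G'" by (rule pi_carrier')
  fix C g assume C: "C \<in> rcosets H" and g: "g \<in> carrier G"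
  have Cc: "C \<subseteq> carrier G" using rcosets_subset[OF grp sg C] .
  show "phi (C #> g) = phi C #>\<^bsub>G'\<^esub> (N #> g)" using phi_act[OF Cc g] .
  show "phi (C #> inv g) = phi C #>\<^bsub>G'\<^esub> inv\<^bsub>G'\<^esub> (N #> g)"
    using phi_act[OF Cc group.inv_closed[OF grp g]] inv'[OF g] by simp
next
  fix g2 assume g2: "g2 \<in> carrier G'"
  let ?g = "coset_rep G N g2"
  have g: "?g \<in> carrier G" "g2 = N #> ?g" using rep_N[OF g2] by auto
  show "\<exists>g\<in>carrier G. (g2 \<in> H' \<longrightarrow> g \<in> H) \<and> (\<forall>C\<in>rcosets H. phi (C #> g) = phi C #>\<^bsub>G'\<^esub> g2)"
  proof (intro bexI conjI impI ballI)
    show "?g \<in> carrier G" using g by simp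
    show "g2 \<in> H' \<Longrightarrow> ?g \<in> H" using rep_NH by blast
    fix C assume C: "C \<in> rcosets H"
    show "phi (C #> ?g) = phi C #>\<^bsub>G'\<^esub> g2" using phi_act[OF rcosets_subset[OF grp sg C] g(1)] g(2) by simp
  qed
next
  show "\<And>h. h \<in> H \<Longrightarrow> N #> h \<in> H'" unfolding quot_sub_def by blast
  show "phi H = H'" by (rule phiH)
qed

lemma iso2: "hiso_loc G' TN H' G T H psi phi (coset_rep G N)"
proof (rule hiso_loc.intro)
  show "group G" by (rule grp)
  show "group G'" by (rule grp')
  show "subgroup H G" by (rule sg)
  show "subgroup H' G'" by (rule subgroupH')
  show "topspace T = carrier G" by (rule ts)
  show "topspace TN = carrier G'" by (rule tsTN)
  show "\<And>C. C \<in> rcosets H \<Longrightarrow> phi C \<in> rcosets\<^bsub>G'\<^esub> H'" by (rule bij1)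
  show "\<And>C. C \<in> rcosets H \<Longrightarrow> psi (phi C) = C" by (rule bij1)
  show "\<And>C. C \<in> rcosets\<^bsub>G'\<^esub> H' \<Longrightarrow> psi C \<in> rcosets H" by (rule bij2)
  show "\<And>C. C \<in> rcosets\<^bsub>G'\<^esub> H' \<Longrightarrow> phi (psi C) = C" by (rule bij2)
  show "continuous_map (quot_top G T H) (quot_top G' TN H') phi" by (rule cont1)
  show "continuous_map (quot_top G' TN H') (quot_top G T H) psi" by (rule cont2)
  show "\<And>g. g \<in> carrier G' \<Longrightarrow> coset_rep G N g \<in> carrier G" using rep_N by blast
  have act: "psi (C2 #>\<^bsub>G'\<^esub> (N #> x)) = psi C2 #> x" if C2: "C2 \<in> rcosets\<^bsub>G'\<^esub> H'" and x: "x \<in> carrier G" for C2 x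
  proof -
    have P: "psi C2 \<in> rcosets H" using bij2(1)[OF C2] .
    have "phi (psi C2 #> x) = C2 #>\<^bsub>G'\<^esub> (N #> x)" using phi_act[OF rcosets_subset[OF grp sg P] x] bij2(2)[OF C2] by simp
    moreover have "psi C2 #> x \<in> rcosets H" using rcosets_mult[OF grp sg P x] .
    ultimately show ?thesis using bij1(2) by metis
  qed
  fix C2 Y assume C2: "C2 \<in> rcosets\<^bsub>G'\<^esub> H'" and Y: "Y \<in> carrier G'"
  have y: "coset_rep G N Y \<in> carrier G" "Y = N #> coset_rep G N Y" using rep_N[OF Y] by auto
  show "psi (C2 #>\<^bsub>G'\<^esub> Y) = psi C2 #> coset_rep G N Y" using act[OF C2 y(1)] y(2) by simp
  have "inv\<^bsub>G'\<^esub> Y = N #> inv (coset_rep G N Y)" using inv'[OF y(1)] y(2) by simp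
  then show "psi (C2 #>\<^bsub>G'\<^esub> inv\<^bsub>G'\<^esub> Y) = psi C2 #> inv (coset_rep G N Y)"
    using act[OF C2 group.inv_closed[OF grp y(1)]] by simp
next
  fix g assume g: "g \<in> carrier G"
  show "\<exists>g2\<in>carrier G'. (g \<in> H \<longrightarrow> g2 \<in> H') \<and> (\<forall>C\<in>rcosets\<^bsub>G'\<^esub> H'. psi (C #>\<^bsub>G'\<^esub> g2) = psi C #> g)"
  proof (intro bexI conjI impI ballI)
    show "N #> g \<in> carrier G'" using pi_carrier'[OF g] .
    show "g \<in> H \<Longrightarrow> N #> g \<in> H'" unfolding quot_sub_def by blast
    fix C2 assume C2: "C2 \<in> rcosets\<^bsub>G'\<^esub> H'"
    have P: "psi C2 \<in> rcosets H" using bij2(1)[OF C2] .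
    have "phi (psi C2 #> g) = C2 #>\<^bsub>G'\<^esub> (N #> g)" using phi_act[OF rcosets_subset[OF grp sg P] g] bij2(2)[OF C2] by simp
    moreover have "psi C2 #> g \<in> rcosets H" using rcosets_mult[OF grp sg P g] .
    ultimately show "psi (C2 #>\<^bsub>G'\<^esub> (N #> g)) = psi C2 #> g" using bij1(2) by metis
  qed
next
  show "\<And>h. h \<in> H' \<Longrightarrow> coset_rep G N h \<in> H" using rep_NH by blast
  have "H \<in> rcosets H" using subgroup.subgroup_in_rcosets[OF sg grp] .
  then show "psi H' = H" using psi_phi phiH by metis
qed

end

context rdsetting
begin

lemma lmod_coset:
  assumes C: "C \<in> rcosets H" and x: "x \<in> C"
  shows "lmod T H l x = lmod T H l (coset_rep G H C)"
proof -
  have xc: "x \<in> carrier G" using C x rcosets_subset[OF grp sg] by blast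
  have "C = H #> x" using rcos_mem_eq[OF grp sg C x] .
  then obtain h where "h \<in> H" "coset_rep G H C = h \<otimes> x" using coset_rep_coset[OF grp sg xc] by metis
  then show ?thesis using lmod_Hinv(1)[of h x] xc by simp
qed

lemma rhs_integrable:
  assumes qm: "quot_measure G T H \<nu>" and f: "f \<in> hecke_alg G T H" and s: "0 \<le> s"
  shows "integrable \<nu> (\<lambda>C. (cmod (f C))\<^sup>2 * (1 + lmod T H l (coset_rep G H C)) powr (2 * s))"
proof -
  let ?Q = "quot_top G T H"
  note b = qm_basic[OF grp sg ts qm]
  have fc: "continuous_map ?Q euclidean f" using f unfolding hecke_alg_def by blast
  have mf: "f \<in> borel_measurable \<nu>"
    using continuous_map_borel_measurable[OF fc] measurable_cong_sets[OF b(1) refl] by blast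
  have ml: "(\<lambda>C. lmod T H l (coset_rep G H C)) \<in> borel_measurable \<nu>"
    using lmod_measurable[OF sg order_refl] measurable_cong_sets[OF b(1) refl] by blast
  note [measurable] = mf ml
  have meas: "(\<lambda>C. (cmod (f C))\<^sup>2 * (1 + lmod T H l (coset_rep G H C)) powr (2 * s)) \<in> borel_measurable \<nu>"
    by measurable
  obtain K where K: "compactin ?Q K" "\<forall>C\<in>rcosets H - K. f C = 0" using f unfolding hecke_alg_def by blast
  have Ks: "K \<in> sets \<nu>"
    using closedin_borel_of[OF compactin_imp_closedin[OF lcg_quot_hausdorff[OF lcg sg cl] K(1)]] b(1) by simp
  have Kf: "emeasure \<nu> K < \<infinity>" using b(3)[OF K(1)] .
  have "compact (f ` K)" using image_compactin[OF K(1) fc] by simp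
  then obtain Bf where Bf: "\<forall>z\<in>f ` K. norm z \<le> Bf" using compact_imp_bounded bounded_pos by metis
  obtain Bl where Bl: "\<forall>C\<in>K. lmod T H l (coset_rep G H C) \<le> Bl" using lmod_compact_bound[OF K(1)] by blast
  have Ksub: "K \<subseteq> rcosets H" using compactin_subset_topspace[OF K(1)] topspace_quot_top[OF grp sg ts] by simp
  have bound: "norm ((cmod (f C))\<^sup>2 * (1 + lmod T H l (coset_rep G H C)) powr (2 * s)) \<le> Bf\<^sup>2 * (1 + Bl) powr (2 * s)"
    if C: "C \<in> K" for C
  proof -
    have rc: "coset_rep G H C \<in> carrier G" using coset_rep(1)[OF grp sg] Ksub C by blast
    have l0: "0 \<le> lmod T H l (coset_rep G H C)" using lmod_nonneg[OF rc] .
    have a: "(cmod (f C))\<^sup>2 \<le> Bf\<^sup>2" using Bf C by (intro power_mono) auto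
    have bb: "(1 + lmod T H l (coset_rep G H C)) powr (2 * s) \<le> (1 + Bl) powr (2 * s)"
      using Bl C l0 s by (intro powr_mono2) auto
    have "norm ((cmod (f C))\<^sup>2 * (1 + lmod T H l (coset_rep G H C)) powr (2 * s)) =
        (cmod (f C))\<^sup>2 * (1 + lmod T H l (coset_rep G H C)) powr (2 * s)" using l0 by simp
    also have "\<dots> \<le> Bf\<^sup>2 * (1 + Bl) powr (2 * s)" using a bb by (intro mult_mono) auto
    finally show ?thesis .
  qed
  show ?thesis
  proof (rule integrableI_bounded_set[OF Ks meas Kf])
    show "AE x\<in>K in \<nu>. norm ((cmod (f x))\<^sup>2 * (1 + lmod T H l (coset_rep G H x)) powr (2 * s)) \<le> Bf\<^sup>2 * (1 + Bl) powr (2 * s)"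
      using bound by auto
    show "AE x in \<nu>. x \<notin> K \<longrightarrow> (cmod (f x))\<^sup>2 * (1 + lmod T H l (coset_rep G H x)) powr (2 * s) = 0"
      using K(2) b(2) by auto
  qed
qed

end

context qsetting
begin

lemma rd_forward:
  assumes cl: "closedin T H" and rd: "has_RD G T H"
  shows "has_RD G' TN H'"
proof -
  interpret i1: hiso_loc G T H G' TN H' phi psi "\<lambda>g. N #> g" by (rule iso1)
  obtain \<nu> l s c where qm: "quot_measure G T H \<nu>" and len: "length_fn G T H l"
    and lb: "locally_bounded_len G T H l" and sc: "s > 0" "c > 0"
    and bnd: "\<forall>f\<in>hecke_alg G T H. lambda_norm G H \<nu> f \<le>
        c * sqrt (LINT C|\<nu>. (cmod (f C))\<^sup>2 * (1 + l (coset_rep G H C)) powr (2 * s))"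
    using rd unfolding has_RD_def by blast
  interpret r: rdsetting G T H l by (rule rdsetting.intro[OF lcg sg cl len lb])
  let ?Q2 = "quot_top G' TN H'"
  let ?\<nu>2 = "distr \<nu> (borel_of ?Q2) phi"
  define l2 where "l2 Y = lmod T H l (coset_rep G N Y)" for Y
  interpret m: mbij \<nu> ?\<nu>2 phi psi "borel_of ?Q2" by (rule i1.mbij_inst[OF qm])
  note b = qm_basic[OF grp sg ts qm]
  have l2N: "l2 (N #> x) = lmod T H l x" if x: "x \<in> carrier G" for x
  proof -
    obtain n where "n \<in> N" "coset_rep G N (N #> x) = n \<otimes> x" using coset_rep_coset[OF grp sgN x] by blast
    then show ?thesis unfolding l2_def using r.lmod_Hinv(1)[of n x] x NH by auto
  qed
  have l2rep: "l2 (coset_rep G' H' C2) = lmod T H l (coset_rep G H (psi C2))" if C2: "C2 \<in> rcosets\<^bsub>G'\<^esub> H'" for C2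
  proof -
    let ?Y = "coset_rep G' H' C2"
    have Y: "?Y \<in> C2" "?Y \<in> carrier G'" using coset_rep[OF grp' subgroupH' C2] by auto
    then have "coset_rep G N ?Y \<in> ?Y" using coset_rep(3)[OF grp sgN] carrier' by simp
    then have "coset_rep G N ?Y \<in> psi C2" using Y unfolding psi_def by blast
    then show ?thesis unfolding l2_def using r.lmod_coset[OF bij2(1)[OF C2]] by simp
  qed
  have qm2: "quot_measure G' TN H' ?\<nu>2" using i1.qm_transfer[OF qm] .
  have len2: "length_fn G' TN H' l2"
    unfolding length_fn_def
  proof (intro conjI ballI)
    show "l2 \<in> borel_measurable (borel_of TN)" unfolding l2_def using r.lmod_measurable[OF sgN NH] .
    fix Y assume Y: "Y \<in> carrier G'"
    obtain y where y: "y \<in> carrier G" "Y = N #> y" using rep_N[OF Y] by blast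
    show "0 \<le> l2 Y" using y l2N r.lmod_nonneg by simp
    show "l2 (inv\<^bsub>G'\<^esub> Y) = l2 Y" using y l2N inv' r.lmod_inv group.inv_closed[OF grp y(1)] by simp
    fix Z assume Z: "Z \<in> carrier G'"
    obtain z where z: "z \<in> carrier G" "Z = N #> z" using rep_N[OF Z] by blast
    show "l2 (Y \<otimes>\<^bsub>G'\<^esub> Z) \<le> l2 Y + l2 Z"
      using y z rsum l2N r.lmod_subadd monoid.m_closed[OF group.is_monoid[OF grp] y(1) z(1)] by simp
  next
    have "N \<in> rcosets N" using subgroup.subgroup_in_rcosets[OF sgN grp] .
    then have "coset_rep G N N \<in> N" using coset_rep(3)[OF grp sgN] by blast
    then show "l2 \<one>\<^bsub>G'\<^esub> = 0" unfolding l2_def using r.lmod_H NH by auto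
  next
    fix h assume "h \<in> H'"
    then show "l2 h = 0" unfolding l2_def using rep_NH r.lmod_H by simp
  qed
  have lb2: "locally_bounded_len G' TN H' l2"
    unfolding locally_bounded_len_def
  proof (intro allI impI)
    fix K2 assume K2: "compactin ?Q2 K2"
    have K2s: "K2 \<subseteq> rcosets\<^bsub>G'\<^esub> H'" using compactin_subset_topspace[OF K2] i1.tsQ2 by simp
    have "compactin (quot_top G T H) (psi ` K2)" using image_compactin[OF K2 i1.cont2] .
    then obtain B where B: "\<forall>C\<in>psi ` K2. lmod T H l (coset_rep G H C) \<le> B" using r.lmod_compact_bound by blast
    have "\<forall>C2\<in>K2. l2 (coset_rep G' H' C2) \<le> B" using B l2rep K2s by auto
    then show "\<exists>B. \<forall>C\<in>K2. l2 (coset_rep G' H' C) \<le> B" by blast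
  qed
  have bnd2: "\<forall>f2\<in>hecke_alg G' TN H'. lambda_norm G' H' ?\<nu>2 f2 \<le>
        c * sqrt (LINT C|?\<nu>2. (cmod (f2 C))\<^sup>2 * (1 + l2 (coset_rep G' H' C)) powr (2 * s))"
  proof
    fix f2 assume f2: "f2 \<in> hecke_alg G' TN H'"
    have inv2: "\<forall>C\<in>rcosets\<^bsub>G'\<^esub> H'. \<forall>h\<in>H'. f2 (C #>\<^bsub>G'\<^esub> h) = f2 C" using f2 unfolding hecke_alg_def by blast
    let ?f = "\<lambda>C. f2 (phi C)"
    have f: "?f \<in> hecke_alg G T H" using i1.hecke1[OF f2] .
    let ?g1 = "\<lambda>C. (cmod (?f C))\<^sup>2 * (1 + l (coset_rep G H C)) powr (2 * s)"
    let ?g2 = "\<lambda>C. (cmod (?f C))\<^sup>2 * (1 + lmod T H l (coset_rep G H C)) powr (2 * s)"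
    have int2: "integrable \<nu> ?g2" using r.rhs_integrable[OF qm f] sc by simp
    have le: "?g1 C \<le> ?g2 C" if "C \<in> space \<nu>" for C
    proof -
      have rc: "coset_rep G H C \<in> carrier G" using coset_rep(1)[OF grp sg] that b(2) by blast
      have "0 \<le> l (coset_rep G H C)" using length_fn_basic(2)[OF len rc] .
      moreover have "l (coset_rep G H C) \<le> lmod T H l (coset_rep G H C)" using r.lmod_ge[OF rc] .
      ultimately have "(1 + l (coset_rep G H C)) powr (2 * s) \<le> (1 + lmod T H l (coset_rep G H C)) powr (2 * s)"
        using sc by (intro powr_mono2) auto
      then show ?thesis by (intro mult_left_mono) auto
    qed
    have I: "(LINT C|\<nu>. ?g1 C) \<le> (LINT C|\<nu>. ?g2 C)"
    proof (cases "integrable \<nu> ?g1")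
      case True then show ?thesis using integral_mono[OF True int2 le] by simp
    next
      case False
      then have "(LINT C|\<nu>. ?g1 C) = 0" by (rule not_integrable_integral_eq)
      moreover have "0 \<le> (LINT C|\<nu>. ?g2 C)" by (rule Bochner_Integration.integral_nonneg) simp
      ultimately show ?thesis by simp
    qed
    have J: "(LINT C|?\<nu>2. (cmod (f2 C))\<^sup>2 * (1 + l2 (coset_rep G' H' C)) powr (2 * s)) = (LINT C|\<nu>. ?g2 C)"
    proof -
      have "(LINT C|?\<nu>2. (cmod (f2 C))\<^sup>2 * (1 + l2 (coset_rep G' H' C)) powr (2 * s)) =
          (LINT C|\<nu>. (cmod (f2 (phi C)))\<^sup>2 * (1 + l2 (coset_rep G' H' (phi C))) powr (2 * s))"
        by (rule m.integral_eq)
      also have "\<dots> = (LINT C|\<nu>. ?g2 C)"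
      proof (rule Bochner_Integration.integral_cong[OF refl])
        fix C assume "C \<in> space \<nu>"
        then have C: "C \<in> rcosets H" using b(2) by simp
        have "l2 (coset_rep G' H' (phi C)) = lmod T H l (coset_rep G H C)"
          using l2rep[OF bij1(1)[OF C]] bij1(2)[OF C] by simp
        then show "(cmod (f2 (phi C)))\<^sup>2 * (1 + l2 (coset_rep G' H' (phi C))) powr (2 * s) = ?g2 C" by simp
      qed
      finally show ?thesis .
    qed
    have "lambda_norm G' H' ?\<nu>2 f2 = lambda_norm G H \<nu> ?f" using i1.lnorm_transfer[OF qm inv2] .
    also have "\<dots> \<le> c * sqrt (LINT C|\<nu>. ?g1 C)" using bnd f by blast
    also have "\<dots> \<le> c * sqrt (LINT C|\<nu>. ?g2 C)" using I sc by (intro mult_left_mono) auto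
    also have "\<dots> = c * sqrt (LINT C|?\<nu>2. (cmod (f2 C))\<^sup>2 * (1 + l2 (coset_rep G' H' C)) powr (2 * s))"
      using J by simp
    finally show "lambda_norm G' H' ?\<nu>2 f2 \<le>
        c * sqrt (LINT C|?\<nu>2. (cmod (f2 C))\<^sup>2 * (1 + l2 (coset_rep G' H' C)) powr (2 * s))" .
  qed
  show ?thesis unfolding has_RD_def using qm2 len2 lb2 sc bnd2 by blast
qed

lemma rd_backward:
  assumes rd: "has_RD G' TN H'"
  shows "has_RD G T H"
proof -
  interpret i2: hiso_loc G' TN H' G T H psi phi "coset_rep G N" by (rule iso2)
  obtain \<nu>2 l2 s c where qm2: "quot_measure G' TN H' \<nu>2" and len2: "length_fn G' TN H' l2"
    and lb2: "locally_bounded_len G' TN H' l2" and sc: "s > 0" "c > 0"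
    and bnd: "\<forall>f\<in>hecke_alg G' TN H'. lambda_norm G' H' \<nu>2 f \<le>
        c * sqrt (LINT C|\<nu>2. (cmod (f C))\<^sup>2 * (1 + l2 (coset_rep G' H' C)) powr (2 * s))"
    using rd unfolding has_RD_def by blast
  let ?Q1 = "quot_top G T H"
  let ?\<nu> = "distr \<nu>2 (borel_of ?Q1) psi"
  define l where "l x = l2 (N #> x)" for x
  interpret m: mbij \<nu>2 ?\<nu> psi phi "borel_of ?Q1" by (rule i2.mbij_inst[OF qm2])
  note b = qm_basic[OF grp' subgroupH' tsTN qm2]
  note lb = length_fn_basic[OF len2]
  have l2rep: "l2 (coset_rep G' H' (phi C)) = l (coset_rep G H C)" if C: "C \<in> rcosets H" for C
  proof -
    have r: "coset_rep G H C \<in> carrier G" "C = H #> coset_rep G H C" using coset_rep[OF grp sg C] by auto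
    have "phi C = H' #>\<^bsub>G'\<^esub> (N #> coset_rep G H C)" using phi_coset[OF r(1)] r(2) by simp
    then obtain h where h: "h \<in> H'" "coset_rep G' H' (phi C) = h \<otimes>\<^bsub>G'\<^esub> (N #> coset_rep G H C)"
      using coset_rep_coset[OF grp' subgroupH' pi_carrier'[OF r(1)]] by metis
    then show ?thesis unfolding l_def using length_fn_Hinv(1)[OF len2 grp' subgroupH' h(1) pi_carrier'[OF r(1)]] by simp
  qed
  have qm: "quot_measure G T H ?\<nu>" using i2.qm_transfer[OF qm2] .
  have len: "length_fn G T H l"
    unfolding length_fn_def
  proof (intro conjI ballI)
    have "(\<lambda>x. N #> x) \<in> borel_of T \<rightarrow>\<^sub>M borel_of TN"
      using continuous_map_measurable[OF lcg_quot_cont[OF lcg sgN]] .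
    then show "l \<in> borel_measurable (borel_of T)" unfolding l_def using lb(1) by (rule measurable_compose)
    fix x assume x: "x \<in> carrier G"
    show "0 \<le> l x" unfolding l_def using lb(2) pi_carrier'[OF x] .
    show "l (inv x) = l x" unfolding l_def using inv'[OF x] lb(4)[OF pi_carrier'[OF x]] by simp
    fix y assume y: "y \<in> carrier G"
    show "l (x \<otimes> y) \<le> l x + l y" unfolding l_def using rsum[OF x y] lb(5)[OF pi_carrier'[OF x] pi_carrier'[OF y]] by simp
  next
    have "N #> \<one> = N" using group.coset_mult_one[OF grp subgroup.subset[OF sgN]] .
    then show "l \<one> = 0" unfolding l_def using lb(3) by simp
  next
    fix h assume "h \<in> H"
    then have "N #> h \<in> H'" unfolding quot_sub_def by blast
    then show "l h = 0" unfolding l_def using lb(6) by simp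
  qed
  have lbd: "locally_bounded_len G T H l"
    unfolding locally_bounded_len_def
  proof (intro allI impI)
    fix K assume K: "compactin ?Q1 K"
    have Ks: "K \<subseteq> rcosets H" using compactin_subset_topspace[OF K] i2.tsQ2 by simp
    have "compactin (quot_top G' TN H') (phi ` K)" using image_compactin[OF K i2.cont2] .
    then obtain B where B: "\<forall>C2\<in>phi ` K. l2 (coset_rep G' H' C2) \<le> B" using lb2 unfolding locally_bounded_len_def by blast
    have "\<forall>C\<in>K. l (coset_rep G H C) \<le> B"
    proof
      fix C assume C: "C \<in> K"
      then have "l2 (coset_rep G' H' (phi C)) \<le> B" using B by blast
      then show "l (coset_rep G H C) \<le> B" using l2rep[of C] Ks C by auto
    qed
    then show "\<exists>B. \<forall>C\<in>K. l (coset_rep G H C) \<le> B" by blast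
  qed
  have bnd1: "\<forall>f\<in>hecke_alg G T H. lambda_norm G H ?\<nu> f \<le>
        c * sqrt (LINT C|?\<nu>. (cmod (f C))\<^sup>2 * (1 + l (coset_rep G H C)) powr (2 * s))"
  proof
    fix f assume f: "f \<in> hecke_alg G T H"
    have inv1: "\<forall>C\<in>rcosets H. \<forall>h\<in>H. f (C #> h) = f C" using f unfolding hecke_alg_def by blast
    let ?f2 = "\<lambda>C. f (psi C)"
    have f2: "?f2 \<in> hecke_alg G' TN H'" using i2.hecke1[OF f] .
    have J: "(LINT C|?\<nu>. (cmod (f C))\<^sup>2 * (1 + l (coset_rep G H C)) powr (2 * s)) =
        (LINT C|\<nu>2. (cmod (?f2 C))\<^sup>2 * (1 + l2 (coset_rep G' H' C)) powr (2 * s))"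
    proof -
      have "(LINT C|?\<nu>. (cmod (f C))\<^sup>2 * (1 + l (coset_rep G H C)) powr (2 * s)) =
          (LINT C|\<nu>2. (cmod (f (psi C)))\<^sup>2 * (1 + l (coset_rep G H (psi C))) powr (2 * s))"
        by (rule m.integral_eq)
      also have "\<dots> = (LINT C|\<nu>2. (cmod (?f2 C))\<^sup>2 * (1 + l2 (coset_rep G' H' C)) powr (2 * s))"
      proof (rule Bochner_Integration.integral_cong[OF refl])
        fix C2 assume "C2 \<in> space \<nu>2"
        then have C2: "C2 \<in> rcosets\<^bsub>G'\<^esub> H'" using b(2) by simp
        have "l (coset_rep G H (psi C2)) = l2 (coset_rep G' H' C2)"
          using l2rep[OF bij2(1)[OF C2]] bij2(2)[OF C2] by simp
        then show "(cmod (f (psi C2)))\<^sup>2 * (1 + l (coset_rep G H (psi C2))) powr (2 * s) =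
            (cmod (?f2 C2))\<^sup>2 * (1 + l2 (coset_rep G' H' C2)) powr (2 * s)" by simp
      qed
      finally show ?thesis .
    qed
    have "lambda_norm G H ?\<nu> f = lambda_norm G' H' \<nu>2 ?f2" using i2.lnorm_transfer[OF qm2 inv1] .
    also have "\<dots> \<le> c * sqrt (LINT C|\<nu>2. (cmod (?f2 C))\<^sup>2 * (1 + l2 (coset_rep G' H' C)) powr (2 * s))"
      using bnd f2 by blast
    also have "\<dots> = c * sqrt (LINT C|?\<nu>. (cmod (f C))\<^sup>2 * (1 + l (coset_rep G H C)) powr (2 * s))"
      using J by simp
    finally show "lambda_norm G H ?\<nu> f \<le> c * sqrt (LINT C|?\<nu>. (cmod (f C))\<^sup>2 * (1 + l (coset_rep G H C)) powr (2 * s))" .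
  qed
  show ?thesis unfolding has_RD_def using qm len lbd sc bnd1 by blast
qed

end

lemma part1:
  fixes G :: "('a, 'b) monoid_scheme" and T :: "'a topology" and H N :: "'a set"
  assumes "hecke_pair G T H" "N \<lhd> G" "closedin T N" "N \<subseteq> H"
  shows "has_RD G T H \<longleftrightarrow> has_RD (G Mod N) (quot_top G T N) (quot_sub G N H)"
proof -
  have h: "lc_group G T" "subgroup H G" "closedin T H" using assms(1) unfolding hecke_pair_def by auto
  interpret q: qsetting G T H N by (rule qsetting.intro[OF h(1,2) assms(2,4)])
  show ?thesis using q.rd_forward[OF h(3)] q.rd_backward by blast
qed

lemma grp_cancel:
  fixes G (structure)
  assumes "group G" "x \<in> carrier G" "y \<in> carrier G"
  shows "x \<otimes> (inv x \<otimes> y) = y" "inv x \<otimes> (x \<otimes> y) = y"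
proof -
  interpret group G by fact
  show "x \<otimes> (inv x \<otimes> y) = y" using assms by (simp add: m_assoc[symmetric])
  show "inv x \<otimes> (x \<otimes> y) = y" using assms by (simp add: m_assoc[symmetric])
qed

lemma core_mem:
  fixes G (structure)
  assumes "group G" "x \<in> carrier G" and that: "H \<subseteq> carrier G"
  shows "k \<in> x <# H #> inv x \<longleftrightarrow> k \<in> carrier G \<and> inv x \<otimes> k \<otimes> x \<in> H"
proof -
  interpret group G by fact
  have "k \<in> x <# H #> inv x \<longleftrightarrow> (\<exists>h\<in>H. k = x \<otimes> h \<otimes> inv x)"
    unfolding l_coset_def r_coset_def by blast
  also have "\<dots> \<longleftrightarrow> k \<in> carrier G \<and> inv x \<otimes> k \<otimes> x \<in> H"
  proof
    assume "\<exists>h\<in>H. k = x \<otimes> h \<otimes> inv x"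
    then obtain h where h: "h \<in> H" "k = x \<otimes> h \<otimes> inv x" by blast
    have hc: "h \<in> carrier G" using h(1) that by blast
    have "inv x \<otimes> k \<otimes> x = h" using h(2) hc assms(2) by (simp add: m_assoc grp_cancel[OF assms(1)])
    then show "k \<in> carrier G \<and> inv x \<otimes> k \<otimes> x \<in> H" using h hc assms(2) by simp
  next
    assume k: "k \<in> carrier G \<and> inv x \<otimes> k \<otimes> x \<in> H"
    have "x \<otimes> (inv x \<otimes> k \<otimes> x) \<otimes> inv x = k" using k assms(2) by (simp add: m_assoc grp_cancel[OF assms(1)])
    then show "\<exists>h\<in>H. k = x \<otimes> h \<otimes> inv x" using k by metis
  qed
  finally show ?thesis .
qed

lemma core_normal:
  fixes G (structure)
  assumes grp: "group G" and sg: "subgroup H G"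
  shows "(\<Inter>x\<in>carrier G. x <# H #> inv x) \<lhd> G" "(\<Inter>x\<in>carrier G. x <# H #> inv x) \<subseteq> H"
proof -
  interpret group G by fact
  have Hc: "H \<subseteq> carrier G" using subgroup.subset[OF sg] .
  define K where "K = (\<Inter>x\<in>carrier G. x <# H #> inv x)"
  have Kc: "K = {k \<in> carrier G. \<forall>x\<in>carrier G. inv x \<otimes> k \<otimes> x \<in> H}"
    unfolding K_def using core_mem[OF grp _ Hc] by auto
  have sgK: "subgroup K G"
  proof (rule subgroupI)
    show "K \<subseteq> carrier G" unfolding Kc by blast
    have "\<one> \<in> K" unfolding Kc using subgroup.one_closed[OF sg] by simp
    then show "K \<noteq> {}" by blast
    fix a b assume a: "a \<in> K" and b: "b \<in> K"
    show "inv a \<in> K" unfolding Kc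
    proof (intro CollectI conjI ballI)
      show "inv a \<in> carrier G" using a unfolding Kc by simp
      fix x assume x: "x \<in> carrier G"
      have "inv x \<otimes> a \<otimes> x \<in> H" using a x unfolding Kc by blast
      then have "inv (inv x \<otimes> a \<otimes> x) \<in> H" using subgroup.m_inv_closed[OF sg] by blast
      moreover have "inv (inv x \<otimes> a \<otimes> x) = inv x \<otimes> inv a \<otimes> x"
        using a x unfolding Kc by (simp add: inv_mult_group m_assoc grp_cancel[OF grp])
      ultimately show "inv x \<otimes> inv a \<otimes> x \<in> H" by simp
    qed
    show "a \<otimes> b \<in> K" unfolding Kc
    proof (intro CollectI conjI ballI)
      show "a \<otimes> b \<in> carrier G" using a b unfolding Kc by simp
      fix x assume x: "x \<in> carrier G"
      have "inv x \<otimes> a \<otimes> x \<in> H" "inv x \<otimes> b \<otimes> x \<in> H" using a b x unfolding Kc by blast+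
      then have "(inv x \<otimes> a \<otimes> x) \<otimes> (inv x \<otimes> b \<otimes> x) \<in> H" using subgroup.m_closed[OF sg] by blast
      moreover have "(inv x \<otimes> a \<otimes> x) \<otimes> (inv x \<otimes> b \<otimes> x) = inv x \<otimes> (a \<otimes> b) \<otimes> x"
        using a b x unfolding Kc by (simp add: m_assoc grp_cancel[OF grp])
      ultimately show "inv x \<otimes> (a \<otimes> b) \<otimes> x \<in> H" by simp
    qed
  qed
  have "\<forall>g\<in>carrier G. \<forall>k\<in>K. g \<otimes> k \<otimes> inv g \<in> K"
  proof (intro ballI)
    fix g k assume g: "g \<in> carrier G" and k: "k \<in> K"
    show "g \<otimes> k \<otimes> inv g \<in> K" unfolding Kc
    proof (intro CollectI conjI ballI)
      show "g \<otimes> k \<otimes> inv g \<in> carrier G" using g k unfolding Kc by simp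
      fix x assume x: "x \<in> carrier G"
      have "inv (inv g \<otimes> x) \<otimes> k \<otimes> (inv g \<otimes> x) \<in> H" using k g x unfolding Kc by simp
      moreover have "inv (inv g \<otimes> x) \<otimes> k \<otimes> (inv g \<otimes> x) = inv x \<otimes> (g \<otimes> k \<otimes> inv g) \<otimes> x"
        using g k x unfolding Kc by (simp add: inv_mult_group m_assoc grp_cancel[OF grp])
      ultimately show "inv x \<otimes> (g \<otimes> k \<otimes> inv g) \<otimes> x \<in> H" by simp
    qed
  qed
  then show "(\<Inter>x\<in>carrier G. x <# H #> inv x) \<lhd> G" using normal_inv_iff sgK unfolding K_def by blast
  show "(\<Inter>x\<in>carrier G. x <# H #> inv x) \<subseteq> H"
  proof
    fix k assume "k \<in> (\<Inter>x\<in>carrier G. x <# H #> inv x)"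
    then have "inv \<one> \<otimes> k \<otimes> \<one> \<in> H" "k \<in> carrier G" using Kc unfolding K_def by auto
    then show "k \<in> H" by simp
  qed
qed

theorem lemma3p11:
  fixes G :: "('a, 'b) monoid_scheme" and T :: "'a topology" and H N :: "'a set"
  shows "(hecke_pair G T H \<and> N \<lhd> G \<and> closedin T N \<and> N \<subseteq> H \<longrightarrow>
            (has_RD G T H \<longleftrightarrow> has_RD (G Mod N) (quot_top G T N) (quot_sub G N H)))
       \<and> (\<forall>(G2 :: ('a, 'b) monoid_scheme) H2.
            hecke_pair G2 (discrete_topology (carrier G2)) H2 \<longrightarrow>
            (let K = (\<Inter>x \<in> carrier G2. x <#\<^bsub>G2\<^esub> H2 #>\<^bsub>G2\<^esub> inv\<^bsub>G2\<^esub> x) in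
              has_RD G2 (discrete_topology (carrier G2)) H2 \<longleftrightarrow>
              has_RD (G2 Mod K) (quot_top G2 (discrete_topology (carrier G2)) K) (quot_sub G2 K H2)))"
proof (intro conjI impI allI)
  assume "hecke_pair G T H \<and> N \<lhd> G \<and> closedin T N \<and> N \<subseteq> H"
  then show "has_RD G T H \<longleftrightarrow> has_RD (G Mod N) (quot_top G T N) (quot_sub G N H)"
    using part1 by blast
next
  fix G2 :: "('a, 'b) monoid_scheme" and H2
  assume hp: "hecke_pair G2 (discrete_topology (carrier G2)) H2"
  have h: "group G2" "subgroup H2 G2"
    using hp unfolding hecke_pair_def lc_group_def by auto
  define K where "K = (\<Inter>x \<in> carrier G2. x <#\<^bsub>G2\<^esub> H2 #>\<^bsub>G2\<^esub> inv\<^bsub>G2\<^esub> x)"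
  have Kn: "K \<lhd> G2" and KH: "K \<subseteq> H2" using core_normal[OF h] unfolding K_def by auto
  have Kc: "closedin (discrete_topology (carrier G2)) K"
    using KH subgroup.subset[OF h(2)] by simp
  have "has_RD G2 (discrete_topology (carrier G2)) H2 \<longleftrightarrow>
      has_RD (G2 Mod K) (quot_top G2 (discrete_topology (carrier G2)) K) (quot_sub G2 K H2)"
    using part1[OF hp Kn Kc KH] .
  then show "let K = (\<Inter>x \<in> carrier G2. x <#\<^bsub>G2\<^esub> H2 #>\<^bsub>G2\<^esub> inv\<^bsub>G2\<^esub> x) in
              has_RD G2 (discrete_topology (carrier G2)) H2 \<longleftrightarrow>
              has_RD (G2 Mod K) (quot_top G2 (discrete_topology (carrier G2)) K) (quot_sub G2 K H2)"
    unfolding K_def Let_def .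
qed

end
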